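(* For every integer $n\geq 2$, the vector $$\chi=E^{1,2n-1}_{(-1)}E^{1,2n}_{(-1)}\ket{0}$$ is a singular vector of $V^1(\mathfrak{psl}_{n|n})$, i.e. it is annihilated by every element of $\widehat{\mathfrak{n}}_+$, and the $\widehat{\mathfrak{psl}}_{n|n}$-submodule $U=\langle\chi\rangle$ of $V^1(\mathfrak{psl}_{n|n})$ generated by $\chi$ is a proper non-zero submodule.
   Context: $\mathfrak{psl}_{n|n}$ is the Lie superalgebra of supertraceless $(2n)\times(2n)$ supermatrices acting on $\mathbb{C}^{n|n}$ modulo the identity; $E^{i,j}$ denotes the elementary supermatrix with $1$ in entry $(i,j)$ (odd iff exactly one of $i,j$ is $>n$), and $H^{i,j}=E^{i,i}-E^{j,j}$. The triangular decomposition $\mathfrak{psl}_{n|n}=\mathfrak{n}_+\oplus\mathfrak{h}\oplus\mathfrak{n}_-$ is the one with $\mathfrak{n}_+$ spanned by $E^{i,j}$, $i<j$ (upper triangular), $\mathfrak{n}_-$ by $E^{i,j}$, $i>j$, and $\mathfrak{h}$ the diagonal part. $V^1(\mathfrak{psl}_{n|n})$ is the universal affine vertex superalgebra at level $1$, i.e. the vacuum module induced from the trivial one-dimensional module of $\mathfrak{psl}_{n|n}[[t]]\oplus\mathbb{C}K$ with $K$ acting by $1$, with fields $X(z)=\sum_m X_{(m)}z^{-m-1}$ satisfying $[X_{(m)},Y_{(l)}]=[X,Y]_{(m+l)}+m\delta_{m+l,0}\,\mathrm{str}(XY)$. Here $\widehat{\mathfrak{n}}_+=\mathfrak{n}_+\oplus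 t\,\mathfrak{psl}_{n|n}[[t]]$, so that $X\otimes t^m$ acts as $X_{(m)}$. A vector is singular if it is annihilated by $\widehat{\mathfrak{n}}_+$. *)

theory Defs
  imports Complex_Main
begin

text \<open>A (2n)x(2n) supermatrix is a function nat => nat => complex supported on
  indices {1..2n} x {1..2n}; indices 1..n are even, n+1..2n are odd.\<close>

type_synonym smat = "nat \<Rightarrow> nat \<Rightarrow> complex"

definition is_mat :: "nat \<Rightarrow> smat \<Rightarrow> bool" where
  "is_mat n X \<longleftrightarrow> (\<forall>i j. X i j \<noteq> 0 \<longrightarrow> i \<in> {1..2*n} \<and> j \<in> {1..2*n})"

definition Emat :: "nat \<Rightarrow> nat \<Rightarrow> smat" where
  "Emat i j = (\<lambda>a b. if a = i \<and> b = j then 1 else 0)"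

definition idm :: "nat \<Rightarrow> smat" where
  "idm n = (\<lambda>i j. if i = j \<and> i \<in> {1..2*n} then 1 else 0)"

definition zmat :: smat where
  "zmat = (\<lambda>i j. 0)"

definition odd_entry :: "nat \<Rightarrow> nat \<Rightarrow> nat \<Rightarrow> bool" where
  "odd_entry n i j \<longleftrightarrow> ((n < i) \<noteq> (n < j))"

definition even_part :: "nat \<Rightarrow> smat \<Rightarrow> smat" where
  "even_part n X = (\<lambda>i j. if odd_entry n i j then 0 else X i j)"

definition odd_part :: "nat \<Rightarrow> smat \<Rightarrow> smat" where
  "odd_part n X = (\<lambda>i j. if odd_entry n i j then X i j else 0)"

definition mmul :: "nat \<Rightarrow> smat \<Rightarrow> smat \<Rightarrow> smat" where
  "mmul n X Y = (\<lambda>i j. \<Sum>k\<in>{1..2*n}. X i k * Y k j)"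

definition str :: "nat \<Rightarrow> smat \<Rightarrow> complex" where
  "str n X = (\<Sum>i\<in>{1..n}. X i i) - (\<Sum>i\<in>{n+1..2*n}. X i i)"

text \<open>supertraceless matrices (elements of sl_{n|n}; psl_{n|n} is sl_{n|n} modulo idm n)\<close>
definition sl :: "nat \<Rightarrow> smat \<Rightarrow> bool" where
  "sl n X \<longleftrightarrow> is_mat n X \<and> str n X = 0"

definition valid :: "nat \<Rightarrow> smat \<Rightarrow> bool" where
  "valid n X \<longleftrightarrow> sl n X \<and> (even_part n X = X \<or> odd_part n X = X)"

definition is_odd_mat :: "nat \<Rightarrow> smat \<Rightarrow> bool" where
  "is_odd_mat n X \<longleftrightarrow> odd_part n X = X"

definition sgn :: "nat \<Rightarrow> smat \<Rightarrow> smat \<Rightarrow> complex" where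
  "sgn n X Y = (if is_odd_mat n X \<and> is_odd_mat n Y then -1 else 1)"

definition sbr :: "nat \<Rightarrow> smat \<Rightarrow> smat \<Rightarrow> smat" where
  "sbr n X Y = (\<lambda>i j. mmul n X Y i j - sgn n X Y * mmul n Y X i j)"

definition strictly_upper :: "nat \<Rightarrow> smat \<Rightarrow> bool" where
  "strictly_upper n X \<longleftrightarrow> is_mat n X \<and> (\<forall>i j. X i j \<noteq> 0 \<longrightarrow> i < j)"

text \<open>A generator (X, m) with X homogeneous supertraceless stands for X (x) t^m,
  acting as the mode X_(m). Elements are finitely supported complex
  combinations of words.\<close>

type_synonym word = "(smat \<times> int) list"
type_synonym falg = "word \<Rightarrow> complex"

definition validw :: "nat \<Rightarrow> word \<Rightarrow> bool" where
  "validw n u \<longleftrightarrow> (\<forall>(X, m) \<in> set u. valid n X)"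

definition inA :: "nat \<Rightarrow> falg \<Rightarrow> bool" where
  "inA n a \<longleftrightarrow> finite {u. a u \<noteq> 0} \<and> (\<forall>u. a u \<noteq> 0 \<longrightarrow> validw n u)"

definition mono :: "word \<Rightarrow> falg" where
  "mono w = (\<lambda>u. if u = w then 1 else 0)"

definition fmul :: "falg \<Rightarrow> falg \<Rightarrow> falg" where
  "fmul a b = (\<lambda>u. \<Sum>(v, w) \<in> {(v, w). v @ w = u}. a v * b w)"

definition fadd :: "falg \<Rightarrow> falg \<Rightarrow> falg" where
  "fadd a b = (\<lambda>u. a u + b u)"

definition fsub :: "falg \<Rightarrow> falg \<Rightarrow> falg" where
  "fsub a b = (\<lambda>u. a u - b u)"

definition fscale :: "complex \<Rightarrow> falg \<Rightarrow> falg" where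
  "fscale c a = (\<lambda>u. c * a u)"

text \<open>Defining relations of U(psl_{n|n}^) with K = 1:
  linearity in X, the identity matrix is zero (quotient sl -> psl), and
  [X_(m), Y_(l)] = [X,Y]_(m+l) + m delta_{m+l,0} str(XY).\<close>

inductive_set rels :: "nat \<Rightarrow> falg set" for n where
  lin: "valid n X \<Longrightarrow> valid n Y \<Longrightarrow> is_odd_mat n X = is_odd_mat n Y \<Longrightarrow>
        fsub (fsub (mono [((\<lambda>i j. a * X i j + b * Y i j), m)])
                   (fscale a (mono [(X, m)])))
             (fscale b (mono [(Y, m)])) \<in> rels n"
| cent: "mono [(idm n, m)] \<in> rels n"
| brk: "valid n X \<Longrightarrow> valid n Y \<Longrightarrow>
        fsub (fsub (fsub (mono [(X, m), (Y, l)]) (fscale (sgn n X Y) (mono [(Y, l), (X, m)])))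
                   (mono [(sbr n X Y, m + l)]))
             (fscale (if m + l = 0 then of_int m * str n (mmul n X Y) else 0) (mono [])) \<in> rels n"

text \<open>The left ideal J with V^1(psl_{n|n}) = A / J: generated by the two-sided
  relations and by the left multiples of X_(m), m >= 0 (the vacuum is
  annihilated by psl[t]).\<close>

inductive_set Jid :: "nat \<Rightarrow> falg set" for n where
  zero: "(\<lambda>_. 0) \<in> Jid n"
| add: "a \<in> Jid n \<Longrightarrow> b \<in> Jid n \<Longrightarrow> fadd a b \<in> Jid n"
| scale: "a \<in> Jid n \<Longrightarrow> fscale c a \<in> Jid n"
| rel: "r \<in> rels n \<Longrightarrow> validw n u \<Longrightarrow> validw n w \<Longrightarrow>
        fmul (mono u) (fmul r (mono w)) \<in> Jid n"
| ann: "validw n u \<Longrightarrow> valid n X \<Longrightarrow> 0 \<le> m \<Longrightarrow>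
        fmul (mono u) (mono [(X, m)]) \<in> Jid n"

definition mode :: "nat \<Rightarrow> smat \<Rightarrow> int \<Rightarrow> falg" where
  "mode n X m = fadd (mono [(even_part n X, m)]) (mono [(odd_part n X, m)])"

end

theory Submission
  imports Defs
begin


definition lc :: "complex \<Rightarrow> smat \<Rightarrow> complex \<Rightarrow> smat \<Rightarrow> smat" where
  "lc a X b Y = (\<lambda>i j. a * X i j + b * Y i j)"

definition inC :: "nat \<Rightarrow> bool \<Rightarrow> smat \<Rightarrow> bool" where
  "inC n p X \<longleftrightarrow> (\<forall>i j. X i j \<noteq> 0 \<longrightarrow> odd_entry n i j = p)"

definition sp :: "bool \<Rightarrow> bool \<Rightarrow> complex" where
  "sp p q = (if p \<and> q then -1 else 1)"

definition tb :: "nat \<Rightarrow> complex \<Rightarrow> smat \<Rightarrow> smat \<Rightarrow> smat" where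
  "tb n s A B = (\<lambda>i j. mmul n A B i j - s * mmul n B A i j)"

lemma sbr_tb: "sbr n A B = tb n (sgn n A B) A B"
  by (simp add: sbr_def tb_def)

lemma sgn_sp: "sgn n X Y = sp (is_odd_mat n X) (is_odd_mat n Y)"
  by (simp add: sgn_def sp_def)

lemma sp_sq: "sp p q * sp p q = 1" by (simp add: sp_def)
lemma sp_sym: "sp p q = sp q p" by (auto simp: sp_def)
lemma sgn_sym: "sgn n X Y = sgn n Y X" by (auto simp: sgn_def)
lemma sgn_sq: "sgn n X Y * sgn n X Y = 1" by (simp add: sgn_def)
lemma sp_xor: "sp p (q \<noteq> r) = sp p q * sp p r" by (auto simp: sp_def)
lemma sp_xor2: "sp (q \<noteq> r) p = sp q p * sp r p" by (auto simp: sp_def)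

lemma is_odd_iff: "is_odd_mat n X \<longleftrightarrow> (\<forall>i j. \<not> odd_entry n i j \<longrightarrow> X i j = 0)"
  unfolding is_odd_mat_def odd_part_def fun_eq_iff by auto

lemma even_iff: "even_part n X = X \<longleftrightarrow> (\<forall>i j. odd_entry n i j \<longrightarrow> X i j = 0)"
  unfolding even_part_def fun_eq_iff by auto

lemma valid_inC: "valid n X \<Longrightarrow> inC n (is_odd_mat n X) X"
  unfolding valid_def inC_def even_iff is_odd_mat_def[symmetric] is_odd_iff by auto

lemma inC_par: "inC n p X \<Longrightarrow> X \<noteq> zmat \<Longrightarrow> is_odd_mat n X = p"
  unfolding inC_def is_odd_iff zmat_def fun_eq_iff by (auto; metis)

lemma inC_zero: "inC n p (\<lambda>i j. 0)" by (simp add: inC_def)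

lemma inC_lc: "inC n p X \<Longrightarrow> inC n p Y \<Longrightarrow> inC n p (lc a X b Y)"
  unfolding inC_def lc_def by (metis add.right_neutral mult_zero_right)

lemma odd_entry_trans: "odd_entry n i k = p \<Longrightarrow> odd_entry n k j = q \<Longrightarrow> odd_entry n i j = (p \<noteq> q)"
  unfolding odd_entry_def by auto

lemma odd_entry_sym: "odd_entry n i j = odd_entry n j i"
  unfolding odd_entry_def by auto

lemma inC_mmul: "inC n p X \<Longrightarrow> inC n q Y \<Longrightarrow> inC n (p \<noteq> q) (mmul n X Y)"
proof -
  assume a: "inC n p X" "inC n q Y"
  show ?thesis unfolding inC_def
  proof (intro allI impI)
    fix i j assume "mmul n X Y i j \<noteq> 0"
    then obtain k where "X i k * Y k j \<noteq> 0" unfolding mmul_def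
      by (meson sum.not_neutral_contains_not_neutral)
    then have "X i k \<noteq> 0" "Y k j \<noteq> 0" by auto
    then show "odd_entry n i j = (p \<noteq> q)" using a unfolding inC_def
      by (metis odd_entry_trans)
  qed
qed

lemma inC_tb: "inC n p X \<Longrightarrow> inC n q Y \<Longrightarrow> inC n (p \<noteq> q) (tb n s X Y)"
proof -
  assume a: "inC n p X" "inC n q Y"
  have "inC n (p \<noteq> q) (lc 1 (mmul n X Y) (-s) (mmul n Y X))"
    by (rule inC_lc) (use inC_mmul[OF a] inC_mmul[OF a(2) a(1)] in \<open>auto simp: inC_def\<close>)
  then show ?thesis unfolding lc_def tb_def by (simp add: algebra_simps)
qed

lemma inC_sbr: "valid n X \<Longrightarrow> valid n Y \<Longrightarrow> inC n (is_odd_mat n X \<noteq> is_odd_mat n Y) (sbr n X Y)"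
  unfolding sbr_tb by (rule inC_tb[OF valid_inC valid_inC])

lemma mmul_zero1: "mmul n (\<lambda>i j. 0) B = (\<lambda>i j. 0)" by (simp add: mmul_def)
lemma mmul_zero2: "mmul n A (\<lambda>i j. 0) = (\<lambda>i j. 0)" by (simp add: mmul_def)
lemma tb_zero1: "tb n s (\<lambda>i j. 0) B = (\<lambda>i j. 0)" by (simp add: tb_def mmul_def)
lemma tb_zero2: "tb n s A (\<lambda>i j. 0) = (\<lambda>i j. 0)" by (simp add: tb_def mmul_def)

lemma sbr_tb2: "inC n p B \<Longrightarrow> sbr n A B = tb n (sp (is_odd_mat n A) p) A B"
proof (cases "B = zmat")
  case True then show ?thesis by (simp add: zmat_def sbr_def mmul_def tb_def)
next
  case False
  assume "inC n p B"
  then have h: "is_odd_mat n B = p" using False inC_par by blast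
  show ?thesis unfolding sbr_tb sgn_sp h by (rule refl)
qed

lemma sbr_tb1: "inC n p A \<Longrightarrow> sbr n A B = tb n (sp p (is_odd_mat n B)) A B"
proof (cases "A = zmat")
  case True then show ?thesis by (simp add: zmat_def sbr_def mmul_def tb_def)
next
  case False
  assume "inC n p A"
  then have h: "is_odd_mat n A = p" using False inC_par by blast
  show ?thesis unfolding sbr_tb sgn_sp h by (rule refl)
qed

lemma mmul_lc1: "mmul n (lc a A b B) C = lc a (mmul n A C) b (mmul n B C)"
  by (simp add: mmul_def lc_def sum.distrib sum_distrib_left algebra_simps)
lemma mmul_lc2: "mmul n C (lc a A b B) = lc a (mmul n C A) b (mmul n C B)"
  by (simp add: mmul_def lc_def sum.distrib sum_distrib_left algebra_simps)

lemma mmul_assoc: "mmul n (mmul n A B) C = mmul n A (mmul n B C)"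
proof -
  have "\<And>i j. (\<Sum>k\<in>{1..2*n}. (\<Sum>l\<in>{1..2*n}. A i l * B l k) * C k j)
     = (\<Sum>l\<in>{1..2*n}. A i l * (\<Sum>k\<in>{1..2*n}. B l k * C k j))"
    by (simp add: sum_distrib_left sum_distrib_right mult.assoc) (rule sum.swap)
  then show ?thesis by (simp add: mmul_def)
qed

lemma tb_def2: "tb n s A B = lc 1 (mmul n A B) (-s) (mmul n B A)"
  by (simp add: tb_def lc_def)

definition eps :: "nat \<Rightarrow> nat \<Rightarrow> complex" where
  "eps n i = (if i \<le> n then 1 else -1)"

lemma str_eps: "str n M = (\<Sum>i\<in>{1..2*n}. eps n i * M i i)"
proof -
  have u: "{1..2*n} = {1..n} \<union> {n+1..2*n}" by auto
  have "(\<Sum>i\<in>{1..2*n}. eps n i * M i i) = (\<Sum>i\<in>{1..n}. eps n i * M i i) + (\<Sum>i\<in>{n+1..2*n}. eps n i * M i i)"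
    unfolding u by (rule sum.union_disjoint) auto
  also have "(\<Sum>i\<in>{1..n}. eps n i * M i i) = (\<Sum>i\<in>{1..n}. M i i)"
    by (rule sum.cong) (auto simp: eps_def)
  also have "(\<Sum>i\<in>{n+1..2*n}. eps n i * M i i) = - (\<Sum>i\<in>{n+1..2*n}. M i i)"
    by (simp add: eps_def sum_negf[symmetric])
  finally show ?thesis by (simp add: str_def)
qed

lemma str_lc: "str n (lc a A b B) = a * str n A + b * str n B"
  by (simp add: str_def lc_def sum.distrib sum_distrib_left algebra_simps)

lemma str_mmul_swap:
  assumes "inC n p X" "inC n q Y"
  shows "str n (mmul n X Y) = sp p q * str n (mmul n Y X)"
proof -
  have "str n (mmul n X Y) = (\<Sum>i\<in>{1..2*n}. \<Sum>k\<in>{1..2*n}. eps n i * (X i k * Y k i))"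
    by (simp add: str_eps mmul_def sum_distrib_left)
  also have "\<dots> = (\<Sum>i\<in>{1..2*n}. \<Sum>k\<in>{1..2*n}. sp p q * (eps n k * (Y k i * X i k)))"
  proof (intro sum.cong refl)
    fix i k
    show "eps n i * (X i k * Y k i) = sp p q * (eps n k * (Y k i * X i k))"
    proof (cases "X i k = 0 \<or> Y k i = 0")
      case True then show ?thesis by auto
    next
      case False
      then have "odd_entry n i k = p" "odd_entry n k i = q" using assms unfolding inC_def by auto
      then have "p = q" "odd_entry n i k = p" by (auto simp: odd_entry_sym)
      then show ?thesis by (cases p) (auto simp: sp_def eps_def odd_entry_def)
    qed
  qed
  also have "\<dots> = sp p q * (\<Sum>k\<in>{1..2*n}. \<Sum>i\<in>{1..2*n}. eps n k * (Y k i * X i k))"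
    by (subst sum.swap) (simp add: sum_distrib_left)
  also have "\<dots> = sp p q * str n (mmul n Y X)"
    by (simp add: str_eps mmul_def sum_distrib_left)
  finally show ?thesis .
qed

lemma str_odd_zero:
  assumes "inC n True M" shows "str n M = 0"
proof -
  have "\<And>i. M i i = 0" using assms unfolding inC_def odd_entry_def by auto
  then show ?thesis by (simp add: str_def)
qed

lemma str_mmul_mixed:
  assumes "inC n p X" "inC n q Y" "p \<noteq> q" shows "str n (mmul n X Y) = 0"
  using inC_mmul[OF assms(1,2)] assms(3) str_odd_zero by auto

lemma valid_ismat: "valid n X \<Longrightarrow> is_mat n X" by (simp add: valid_def sl_def)

lemma mmul_ismat: "is_mat n A \<Longrightarrow> is_mat n B \<Longrightarrow> is_mat n (mmul n A B)"
  unfolding is_mat_def mmul_def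
  by (metis (no_types, lifting) mult_eq_0_iff sum.neutral)

lemma lc_ismat: "is_mat n A \<Longrightarrow> is_mat n B \<Longrightarrow> is_mat n (lc a A b B)"
  unfolding is_mat_def lc_def by (metis add.right_neutral mult_zero_right)

lemma inC_homog: "inC n p M \<Longrightarrow> even_part n M = M \<or> odd_part n M = M"
  unfolding inC_def even_iff is_odd_mat_def[symmetric] is_odd_iff by auto

lemma valid_intro: "is_mat n M \<Longrightarrow> str n M = 0 \<Longrightarrow> inC n p M \<Longrightarrow> valid n M"
  unfolding valid_def sl_def using inC_homog by blast

lemma valid_sbr:
  assumes "valid n X" "valid n Y" shows "valid n (sbr n X Y)"
proof (rule valid_intro)
  show "is_mat n (sbr n X Y)" using assms
    by (simp add: sbr_tb tb_def2 lc_ismat mmul_ismat valid_ismat)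
  have "str n (mmul n X Y) = sgn n X Y * str n (mmul n Y X)"
    using str_mmul_swap[OF valid_inC[OF assms(1)] valid_inC[OF assms(2)]] by (simp add: sgn_sp)
  then show "str n (sbr n X Y) = 0" by (simp add: sbr_tb tb_def2 str_lc)
  show "inC n (is_odd_mat n X \<noteq> is_odd_mat n Y) (sbr n X Y)" using inC_sbr assms .
qed

lemma valid_lc:
  assumes "valid n X" "valid n Y" "inC n p X" "inC n p Y" shows "valid n (lc a X b Y)"
proof (rule valid_intro[of n _ p])
  show "is_mat n (lc a X b Y)" using assms by (simp add: lc_ismat valid_ismat)
  show "str n (lc a X b Y) = 0" using assms by (simp add: str_lc valid_def sl_def)
  show "inC n p (lc a X b Y)" using assms by (simp add: inC_lc)
qed

lemma sbr_antisym: "sbr n Y X = lc (- sgn n X Y) (sbr n X Y) 0 (sbr n X Y)"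
proof -
  have s: "sgn n Y X = sgn n X Y" by (rule sgn_sym)
  have "sgn n X Y = 1 \<or> sgn n X Y = -1" by (simp add: sgn_def)
  then show ?thesis unfolding sbr_def lc_def s by (elim disjE) (simp_all add: add.commute)
qed

lemma str_swap_valid: assumes "valid n X" "valid n Y"
  shows "str n (mmul n X Y) = sgn n X Y * str n (mmul n Y X)"
  using str_mmul_swap[OF valid_inC[OF assms(1)] valid_inC[OF assms(2)]] by (simp add: sgn_sp)

lemma str_nz_par: assumes "valid n X" "valid n Y" "str n (mmul n X Y) \<noteq> 0"
  shows "is_odd_mat n X = is_odd_mat n Y"
  using str_mmul_mixed[OF valid_inC[OF assms(1)] valid_inC[OF assms(2)]] assms(3) by blast

lemma sbr_nz_par: assumes "valid n X" "valid n Y" "sbr n X Y \<noteq> zmat"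
  shows "is_odd_mat n (sbr n X Y) = (is_odd_mat n X \<noteq> is_odd_mat n Y)"
  by (rule inC_par[OF inC_sbr[OF assms(1,2)] assms(3)])

lemma sgn_sbr: assumes "valid n X" "valid n Y" "sbr n X Y \<noteq> zmat"
  shows "sgn n Z (sbr n X Y) = sgn n Z X * sgn n Z Y"
  unfolding sgn_sp sbr_nz_par[OF assms] by (rule sp_xor)

lemma sgn_sbr1: assumes "valid n X" "valid n Y" "sbr n X Y \<noteq> zmat"
  shows "sgn n (sbr n X Y) Z = sgn n X Z * sgn n Y Z"
  unfolding sgn_sp sbr_nz_par[OF assms] by (rule sp_xor2)

lemma tb_lc2: "tb n s C (lc a A b B) = lc a (tb n s C A) b (tb n s C B)"
  by (simp add: tb_def2 mmul_lc1 mmul_lc2) (simp add: lc_def fun_eq_iff algebra_simps)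
lemma tb_lc1: "tb n s (lc a A b B) C = lc a (tb n s A C) b (tb n s B C)"
  by (simp add: tb_def2 mmul_lc1 mmul_lc2) (simp add: lc_def fun_eq_iff algebra_simps)

lemma jacobi_tb:
  fixes z x y :: bool
  shows "tb n (sp z (x \<noteq> y)) Z (tb n (sp x y) X Y) =
    lc 1 (tb n (sp (z \<noteq> x) y) (tb n (sp z x) Z X) Y) (sp z x) (tb n (sp x (z \<noteq> y)) X (tb n (sp z y) Z Y))"
proof -
  let ?m = "mmul n"
  have a1: "?m (?m Z X) Y = ?m Z (?m X Y)" "?m (?m Z Y) X = ?m Z (?m Y X)"
    "?m (?m X Z) Y = ?m X (?m Z Y)" "?m (?m Y Z) X = ?m Y (?m Z X)"
    "?m (?m X Y) Z = ?m X (?m Y Z)" "?m (?m Y X) Z = ?m Y (?m X Z)"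
    by (simp_all add: mmul_assoc)
  show ?thesis
    unfolding tb_def2 mmul_lc1 mmul_lc2 a1
    by (cases z; cases x; cases y) (simp_all add: lc_def sp_def fun_eq_iff algebra_simps)
qed

lemma jacobi:
  assumes "valid n X" "valid n Y" "valid n Z"
  shows "sbr n Z (sbr n X Y) = lc 1 (sbr n (sbr n Z X) Y) (sgn n Z X) (sbr n X (sbr n Z Y))"
proof -
  let ?x = "is_odd_mat n X" and ?y = "is_odd_mat n Y" and ?z = "is_odd_mat n Z"
  have cX: "inC n ?x X" and cY: "inC n ?y Y" and cZ: "inC n ?z Z" using assms valid_inC by auto
  have e1: "sbr n X Y = tb n (sp ?x ?y) X Y" by (simp add: sbr_tb sgn_sp)
  have e2: "sbr n Z X = tb n (sp ?z ?x) Z X" by (simp add: sbr_tb sgn_sp)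
  have e3: "sbr n Z Y = tb n (sp ?z ?y) Z Y" by (simp add: sbr_tb sgn_sp)
  have c1: "inC n (?x \<noteq> ?y) (sbr n X Y)" using inC_sbr assms by blast
  have c2: "inC n (?z \<noteq> ?x) (sbr n Z X)" using inC_sbr assms by blast
  have c3: "inC n (?z \<noteq> ?y) (sbr n Z Y)" using inC_sbr assms by blast
  have "sbr n Z (sbr n X Y) = tb n (sp ?z (?x \<noteq> ?y)) Z (tb n (sp ?x ?y) X Y)"
    using sbr_tb2[OF c1, of Z] e1 by simp
  moreover have "sbr n (sbr n Z X) Y = tb n (sp (?z \<noteq> ?x) ?y) (tb n (sp ?z ?x) Z X) Y"
    using sbr_tb1[OF c2, of Y] e2 by simp
  moreover have "sbr n X (sbr n Z Y) = tb n (sp ?x (?z \<noteq> ?y)) X (tb n (sp ?z ?y) Z Y)"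
    using sbr_tb2[OF c3, of X] e3 by simp
  ultimately show ?thesis using jacobi_tb[of n ?z ?x ?y Z X Y] by (simp add: sgn_sp)
qed

lemma str_invariant:
  assumes "valid n X" "valid n Y" "valid n Z"
  shows "str n (mmul n (sbr n Z X) Y) = str n (mmul n Z (sbr n X Y))"
proof -
  let ?x = "is_odd_mat n X" and ?y = "is_odd_mat n Y" and ?z = "is_odd_mat n Z"
  have cX: "inC n ?x X" and cY: "inC n ?y Y" and cZ: "inC n ?z Z" using assms valid_inC by auto
  have s1: "str n (mmul n X (mmul n Z Y)) = sp ?x (?z \<noteq> ?y) * str n (mmul n (mmul n Z Y) X)"
    by (rule str_mmul_swap[OF cX inC_mmul[OF cZ cY]])
  have "str n (mmul n (sbr n Z X) Y) = str n (mmul n Z (mmul n X Y)) - sp ?z ?x * str n (mmul n X (mmul n Z Y))"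
    by (simp add: sbr_tb tb_def2 mmul_lc1 str_lc mmul_assoc sgn_sp)
  also have "\<dots> = str n (mmul n Z (mmul n X Y)) - sp ?x ?y * str n (mmul n Z (mmul n Y X))"
    using s1 by (simp add: mmul_assoc sp_xor) (cases ?x; cases ?y; cases ?z; simp add: sp_def)
  also have "\<dots> = str n (mmul n Z (sbr n X Y))"
    by (simp add: sbr_tb tb_def2 mmul_lc2 str_lc sgn_sp)
  finally show ?thesis .
qed



type_synonym letter = "smat \<times> int"
type_synonym state = "nat \<Rightarrow> complex"

definition bl :: "nat \<Rightarrow> letter \<Rightarrow> letter \<Rightarrow> letter" where
  "bl n x y = (sbr n (fst x) (fst y), snd x + snd y)"
definition om :: "nat \<Rightarrow> letter \<Rightarrow> letter \<Rightarrow> complex" where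
  "om n x y = (if snd x + snd y = 0 then of_int (snd x) * str n (mmul n (fst x) (fst y)) else 0)"
definition sg :: "nat \<Rightarrow> letter \<Rightarrow> letter \<Rightarrow> complex" where
  "sg n x y = sgn n (fst x) (fst y)"

fun Dc :: "nat \<Rightarrow> letter \<Rightarrow> word \<Rightarrow> (complex \<times> word) list" where
  "Dc n x [] = []"
| "Dc n x (v # w) = (1, bl n x v # w) # (om n x v, w) # map (\<lambda>p. (sg n x v * fst p, v # snd p)) (Dc n x w)"

lemma Dc_len: "p \<in> set (Dc n x w) \<Longrightarrow> length (snd p) \<le> length w"
  by (induction w arbitrary: p) auto

lemma validw_Nil[simp]: "validw n []" by (simp add: validw_def)
lemma validw_Cons[simp]: "validw n (x # w) \<longleftrightarrow> valid n (fst x) \<and> validw n w"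
  by (cases x) (auto simp: validw_def)
lemma validw_append[simp]: "validw n (u @ w) \<longleftrightarrow> validw n u \<and> validw n w"
  by (auto simp: validw_def)

lemma Dc_valid: "valid n (fst x) \<Longrightarrow> validw n w \<Longrightarrow> p \<in> set (Dc n x w) \<Longrightarrow> validw n (snd p)"
  by (induction w arbitrary: p) (auto simp: bl_def valid_sbr)

function Phi :: "nat \<Rightarrow> (letter \<Rightarrow> state \<Rightarrow> state) \<Rightarrow> (state \<Rightarrow> complex) \<Rightarrow> state \<Rightarrow> word \<Rightarrow> complex" where
  "Phi n act fin r [] = fin r"
| "Phi n act fin r (x # w) = (if snd x < 0 then Phi n act fin (act x r) w
     else sum_list (map (\<lambda>p. fst p * Phi n act fin r (snd p)) (Dc n x w)))"
  by pat_completeness auto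
termination
  by (relation "measure (\<lambda>(n,act,fin,r,w). length w)") (auto dest!: Dc_len simp: less_Suc_eq_le)

definition SL :: "(word \<Rightarrow> complex) \<Rightarrow> (complex \<times> word) list \<Rightarrow> complex" where
  "SL f d = sum_list (map (\<lambda>p. fst p * f (snd p)) d)"

lemma SL_Nil[simp]: "SL f [] = 0" by (simp add: SL_def)
lemma SL_Cons[simp]: "SL f (p # d) = fst p * f (snd p) + SL f d" by (simp add: SL_def)
lemma SL_append[simp]: "SL f (d @ e) = SL f d + SL f e" by (simp add: SL_def)
lemma SL_map: "SL f (map (\<lambda>p. (c * fst p, v # snd p)) d) = c * SL (\<lambda>W. f (v # W)) d"
  by (induction d) (auto simp: algebra_simps)
lemma SL_lin: "(\<And>W. W \<in> snd ` set d \<Longrightarrow> f W = a * g W + b * h W) \<Longrightarrow> SL f d = a * SL g d + b * SL h d"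
  by (induction d) (auto simp: algebra_simps)
lemma SL_cong: "(\<And>W. W \<in> snd ` set d \<Longrightarrow> f W = g W) \<Longrightarrow> SL f d = SL g d"
  by (induction d) auto
lemma SL_zero: "(\<And>W. W \<in> snd ` set d \<Longrightarrow> f W = 0) \<Longrightarrow> SL f d = 0"
  by (induction d) auto
lemma SL_add: "SL (\<lambda>W. f W + g W) d = SL f d + SL g d"
  by (induction d) (auto simp: algebra_simps)
lemma SL_scale: "SL (\<lambda>W. c * f W) d = c * SL f d"
  by (induction d) (auto simp: algebra_simps)
lemma SL_Dc_Cons: "SL f (Dc n x (v # w)) = f (bl n x v # w) + om n x v * f w + sg n x v * SL (\<lambda>W. f (v # W)) (Dc n x w)"
  by (simp add: SL_map)

lemma valid_zero: "valid n (\<lambda>i j. 0)"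
  by (rule valid_intro[of n _ False]) (auto simp: is_mat_def str_def inC_def)

lemma zmat_eq: "zmat = (\<lambda>i j. 0)" by (simp add: zmat_def)

lemma lc_zero: "lc 0 X 0 X = (\<lambda>i j. 0)" by (simp add: lc_def)

lemma sbr_lc1:
  assumes "inC n p X" "inC n p Y"
  shows "sbr n (lc a X b Y) V = lc a (sbr n X V) b (sbr n Y V)"
proof -
  have "inC n p (lc a X b Y)" using assms inC_lc by blast
  then show ?thesis using assms by (simp add: sbr_tb1[of n p] tb_lc1)
qed

lemma sbr_lc2:
  assumes "inC n p X" "inC n p Y"
  shows "sbr n V (lc a X b Y) = lc a (sbr n V X) b (sbr n V Y)"
proof -
  have "inC n p (lc a X b Y)" using assms inC_lc by blast
  then show ?thesis using assms by (simp add: sbr_tb2[of n p] tb_lc2)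
qed

lemma om_lc1: "om n (lc a X b Y, m) v = a * om n (X, m) v + b * om n (Y, m) v"
  by (simp add: om_def mmul_lc1 str_lc algebra_simps)
lemma om_lc2: "om n v (lc a X b Y, m) = a * om n v (X, m) + b * om n v (Y, m)"
  by (simp add: om_def mmul_lc2 str_lc algebra_simps)

lemma sgn_fix2: "inC n p M \<Longrightarrow> (M = (\<lambda>i j. 0) \<Longrightarrow> T = 0) \<Longrightarrow> sgn n Z M * T = sp (is_odd_mat n Z) p * T"
  using inC_par[of n p M] by (cases "M = (\<lambda>i j. 0)") (auto simp: sgn_sp zmat_eq)
lemma sgn_fix1: "inC n p M \<Longrightarrow> (M = (\<lambda>i j. 0) \<Longrightarrow> T = 0) \<Longrightarrow> sgn n M Z * T = sp p (is_odd_mat n Z) * T"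
  using inC_par[of n p M] by (cases "M = (\<lambda>i j. 0)") (auto simp: sgn_sp zmat_eq)

locale rmod =
  fixes n :: nat and act :: "letter \<Rightarrow> state \<Rightarrow> state" and fin :: "state \<Rightarrow> complex"
  assumes n_pos: "0 < n"
  and act_lin: "act x (\<lambda>i. a * r i + b * r' i) = (\<lambda>i. a * act x r i + b * act x r' i)"
  and fin_lin: "fin (\<lambda>i. a * r i + b * r' i) = a * fin r + b * fin r'"
  and act_lc: "act (lc a X b Y, m) r = (\<lambda>i. a * act (X, m) r i + b * act (Y, m) r i)"
  and act_idm: "act (idm n, m) r = (\<lambda>i. 0)"
  and act_mod: "valid n X \<Longrightarrow> valid n Y \<Longrightarrow> m < 0 \<Longrightarrow> l < 0 \<Longrightarrow>
      act (Y, l) (act (X, m) r) = (\<lambda>i. sgn n X Y * act (X, m) (act (Y, l) r) i + act (sbr n X Y, m + l) r i)"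
begin

abbreviation P where "P \<equiv> Phi n act fin"

lemma P_neg: "snd x < 0 \<Longrightarrow> P r (x # w) = P (act x r) w" by simp
lemma P_pos: "\<not> snd x < 0 \<Longrightarrow> P r (x # w) = SL (P r) (Dc n x w)" by (simp add: SL_def)

lemma P_slin: "P (\<lambda>i. a * r i + b * r' i) w = a * P r w + b * P r' w"
proof (induction "length w" arbitrary: w r r' rule: less_induct)
  case less
  show ?case
  proof (cases w)
    case Nil then show ?thesis by (simp add: fin_lin)
  next
    case (Cons x w')
    show ?thesis
    proof (cases "snd x < 0")
      case True
      then show ?thesis using less Cons by (simp add: act_lin)
    next
      case False
      have "SL (P (\<lambda>i. a * r i + b * r' i)) (Dc n x w') = a * SL (P r) (Dc n x w') + b * SL (P r') (Dc n x w')"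
        by (rule SL_lin) (use less Cons Dc_len in fastforce)
      then show ?thesis unfolding Cons P_pos[OF False] .
    qed
  qed
qed

lemma P_zero_state: "P (\<lambda>i. 0) w = 0"
  using P_slin[of 0 "\<lambda>i. 0" 0 "\<lambda>i. 0" w] by simp

end



context rmod begin

lemma LIN:
  assumes "validw n Q" "validw n W" "valid n X" "valid n Y" "inC n p X" "inC n p Y"
  shows "P r (Q @ (lc a X b Y, m) # W) = a * P r (Q @ (X, m) # W) + b * P r (Q @ (Y, m) # W)"
  using assms
proof (induction "length Q + length W" arbitrary: Q W X Y a b p m r rule: less_induct)
  case less
  note IH = less.hyps
  show ?case
  proof (cases Q)
    case Nil
    show ?thesis
    proof (cases "m < 0")
      case True
      then show ?thesis using Nil by (simp add: act_lc P_slin)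
    next
      case False
      have inner: "\<And>W' R a b X Y. length R + length W' \<le> length W \<Longrightarrow> validw n R \<Longrightarrow> validw n W' \<Longrightarrow>
          valid n X \<Longrightarrow> valid n Y \<Longrightarrow> inC n p X \<Longrightarrow> inC n p Y \<Longrightarrow>
          SL (\<lambda>V. P r (R @ V)) (Dc n (lc a X b Y, m) W') =
            a * SL (\<lambda>V. P r (R @ V)) (Dc n (X, m) W') + b * SL (\<lambda>V. P r (R @ V)) (Dc n (Y, m) W')"
      proof -
        fix W' R a b X Y
        show "length R + length W' \<le> length W \<Longrightarrow> validw n R \<Longrightarrow> validw n W' \<Longrightarrow>
          valid n X \<Longrightarrow> valid n Y \<Longrightarrow> inC n p X \<Longrightarrow> inC n p Y \<Longrightarrow>
          SL (\<lambda>V. P r (R @ V)) (Dc n (lc a X b Y, m) W') =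
            a * SL (\<lambda>V. P r (R @ V)) (Dc n (X, m) W') + b * SL (\<lambda>V. P r (R @ V)) (Dc n (Y, m) W')"
        proof (induction W' arbitrary: R a b X Y)
          case Nil then show ?case by simp
        next
          case (Cons v W'')
          obtain V l where v: "v = (V, l)" by (cases v)
          have vV: "valid n V" using Cons v by simp
          let ?f = "\<lambda>U. P r (R @ U)"
          let ?q = "is_odd_mat n V"
          have c1: "inC n (p \<noteq> ?q) (sbr n X V)" "inC n (p \<noteq> ?q) (sbr n Y V)"
            using Cons inC_tb vV valid_inC by (auto simp: sbr_tb1[of n p])
          have e1: "?f (bl n (lc a X b Y, m) v # W'') = a * ?f (bl n (X, m) v # W'') + b * ?f (bl n (Y, m) v # W'')"
            using IH[where Q=R and W=W'' and X="sbr n X V" and Y="sbr n Y V" and a=a and b=b and p="p \<noteq> ?q"] Cons c1 vV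
            by (simp add: bl_def v sbr_lc1[of n p] Nil valid_sbr)
          have e2: "om n (lc a X b Y, m) v = a * om n (X, m) v + b * om n (Y, m) v" by (rule om_lc1)
          let ?T = "\<lambda>M. SL (\<lambda>U. ?f (v # U)) (Dc n (M, m) W'')"
          have e3: "?T (lc a X b Y) = a * ?T X + b * ?T Y"
            using Cons.IH[where R="R @ [v]" and a=a and b=b and X=X and Y=Y] Cons by simp
          have z: "\<And>M. valid n M \<Longrightarrow> inC n p M \<Longrightarrow> M = (\<lambda>i j. 0) \<Longrightarrow> ?T M = 0"
          proof -
            fix M assume "valid n M" "inC n p M" "M = (\<lambda>i j. 0)"
            then have "?T M = ?T (lc 0 M 0 M)" by (simp add: lc_zero)
            also have "\<dots> = 0" using Cons.IH[where R="R @ [v]" and a=0 and b=0 and X=M and Y=M] Cons \<open>valid n M\<close> \<open>inC n p M\<close> by simp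
            finally show "?T M = 0" .
          qed
          have cL: "inC n p (lc a X b Y)" using Cons inC_lc by blast
          have vL: "valid n (lc a X b Y)" using Cons valid_lc by blast
          have zX: "X = (\<lambda>i j. 0) \<Longrightarrow> ?T X = 0" using z Cons.prems by blast
          have zY: "Y = (\<lambda>i j. 0) \<Longrightarrow> ?T Y = 0" using z Cons.prems by blast
          have s1: "sg n (lc a X b Y, m) v * ?T (lc a X b Y) = sp p ?q * ?T (lc a X b Y)"
            using sgn_fix1[OF cL z[OF vL cL], of V] by (simp add: sg_def v)
          have s2: "sg n (X, m) v * ?T X = sp p ?q * ?T X"
            using sgn_fix1[of n p X, OF _ zX, of V] Cons.prems by (simp add: sg_def v)
          have s3: "sg n (Y, m) v * ?T Y = sp p ?q * ?T Y"
            using sgn_fix1[of n p Y, OF _ zY, of V] Cons.prems by (simp add: sg_def v)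
          have key: "sg n (lc a X b Y, m) v * ?T (lc a X b Y) = a * (sg n (X, m) v * ?T X) + b * (sg n (Y, m) v * ?T Y)"
          proof -
            have "sg n (lc a X b Y, m) v * ?T (lc a X b Y) = sp p ?q * (a * ?T X + b * ?T Y)"
              using s1 e3 by simp
            also have "\<dots> = a * (sp p ?q * ?T X) + b * (sp p ?q * ?T Y)" by (simp add: algebra_simps)
            also have "\<dots> = a * (sg n (X, m) v * ?T X) + b * (sg n (Y, m) v * ?T Y)"
              by (subst s2[symmetric], subst s3[symmetric], rule refl)
            finally show ?thesis .
          qed
          show ?case unfolding SL_Dc_Cons e1 e2 key by (simp add: algebra_simps)
        qed
      qed
      have "SL (P r) (Dc n (lc a X b Y, m) W) = a * SL (P r) (Dc n (X, m) W) + b * SL (P r) (Dc n (Y, m) W)"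
        using inner[where W'=W and R="[]" and a=a and b=b and X=X and Y=Y] less by simp
      moreover have pp: "\<And>M. P r ((M, m) # W) = SL (P r) (Dc n (M, m) W)"
        by (rule P_pos) (simp add: False)
      ultimately show ?thesis unfolding Nil append_Nil pp by blast
    qed
  next
    case (Cons z Q')
    show ?thesis
    proof (cases "snd z < 0")
      case True
      then show ?thesis using IH[where Q=Q' and W=W and X=X and Y=Y and a=a and b=b and p=p and m=m and r="act z r"] less Cons by simp
    next
      case False
      have inner: "\<And>Q'' R. length R + length Q'' = length Q' \<Longrightarrow> validw n R \<Longrightarrow> validw n Q'' \<Longrightarrow>
          SL (\<lambda>V. P r (R @ V)) (Dc n z (Q'' @ (lc a X b Y, m) # W)) =
            a * SL (\<lambda>V. P r (R @ V)) (Dc n z (Q'' @ (X, m) # W)) + b * SL (\<lambda>V. P r (R @ V)) (Dc n z (Q'' @ (Y, m) # W))"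
      proof -
        fix Q'' R
        show "length R + length Q'' = length Q' \<Longrightarrow> validw n R \<Longrightarrow> validw n Q'' \<Longrightarrow>
          SL (\<lambda>V. P r (R @ V)) (Dc n z (Q'' @ (lc a X b Y, m) # W)) =
            a * SL (\<lambda>V. P r (R @ V)) (Dc n z (Q'' @ (X, m) # W)) + b * SL (\<lambda>V. P r (R @ V)) (Dc n z (Q'' @ (Y, m) # W))"
        proof (induction Q'' arbitrary: R)
          case Nil
          obtain Z k where zz: "z = (Z, k)" by (cases z)
          have vZ: "valid n Z" using less.prems Cons zz by simp
          let ?f = "\<lambda>U. P r (R @ U)"
          let ?q = "is_odd_mat n Z"
          have c1: "inC n (?q \<noteq> p) (sbr n Z X)" "inC n (?q \<noteq> p) (sbr n Z Y)"
            using less.prems inC_tb vZ valid_inC by (auto simp: sbr_tb2[of n p])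
          have e1: "?f (bl n z (lc a X b Y, m) # W) = a * ?f (bl n z (X, m) # W) + b * ?f (bl n z (Y, m) # W)"
            using IH[where Q=R and W=W and X="sbr n Z X" and Y="sbr n Z Y" and a=a and b=b and p="?q \<noteq> p"] Nil less.prems c1 vZ Cons
            by (simp add: bl_def zz sbr_lc2[of n p] valid_sbr)
          have e2: "om n z (lc a X b Y, m) = a * om n z (X, m) + b * om n z (Y, m)" by (rule om_lc2)
          let ?T = "\<lambda>M. SL (\<lambda>U. ?f ((M, m) # U)) (Dc n z W)"
          have tl: "\<And>M N. valid n M \<Longrightarrow> valid n N \<Longrightarrow> inC n p M \<Longrightarrow> inC n p N \<Longrightarrow> \<forall>c d. ?T (lc c M d N) = c * ?T M + d * ?T N"
          proof (intro allI)
            fix M N c d assume h: "valid n M" "valid n N" "inC n p M" "inC n p N"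
            show "?T (lc c M d N) = c * ?T M + d * ?T N"
            proof (rule SL_lin)
              fix U assume "U \<in> snd ` set (Dc n z W)"
              then obtain q where q: "q \<in> set (Dc n z W)" "U = snd q" by auto
              have "valid n (fst z)" using less.prems Cons by simp
              then have "length U \<le> length W" "validw n U"
                using Dc_len[OF q(1)] Dc_valid[OF _ _ q(1)] less.prems q(2) by auto
              then show "?f ((lc c M d N, m) # U) = c * ?f ((M, m) # U) + d * ?f ((N, m) # U)"
                using IH[where Q=R and W=U and X=M and Y=N and a=c and b=d and p=p and m=m and r=r] Nil less.prems Cons h by simp
            qed
          qed
          have e3: "?T (lc a X b Y) = a * ?T X + b * ?T Y" using tl less.prems by blast
          have z: "\<And>M. valid n M \<Longrightarrow> inC n p M \<Longrightarrow> M = (\<lambda>i j. 0) \<Longrightarrow> ?T M = 0"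
          proof -
            fix M assume h: "valid n M" "inC n p M" "M = (\<lambda>i j. 0)"
            then have "?T M = ?T (lc 0 M 0 M)" by (simp add: lc_zero)
            also have "\<dots> = 0" using tl[OF h(1) h(1) h(2) h(2)] by simp
            finally show "?T M = 0" .
          qed
          have cL: "inC n p (lc a X b Y)" using less.prems inC_lc by blast
          have vL: "valid n (lc a X b Y)" using less.prems valid_lc by blast
          have zX: "X = (\<lambda>i j. 0) \<Longrightarrow> ?T X = 0" using z less.prems by blast
          have zY: "Y = (\<lambda>i j. 0) \<Longrightarrow> ?T Y = 0" using z less.prems by blast
          have s1: "sg n z (lc a X b Y, m) * ?T (lc a X b Y) = sp ?q p * ?T (lc a X b Y)"
            using sgn_fix2[OF cL z[OF vL cL], of Z] by (simp add: sg_def zz)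
          have s2: "sg n z (X, m) * ?T X = sp ?q p * ?T X"
            using sgn_fix2[of n p X, OF _ zX, of Z] less.prems by (simp add: sg_def zz)
          have s3: "sg n z (Y, m) * ?T Y = sp ?q p * ?T Y"
            using sgn_fix2[of n p Y, OF _ zY, of Z] less.prems by (simp add: sg_def zz)
          have key: "sg n z (lc a X b Y, m) * ?T (lc a X b Y) = a * (sg n z (X, m) * ?T X) + b * (sg n z (Y, m) * ?T Y)"
          proof -
            have "sg n z (lc a X b Y, m) * ?T (lc a X b Y) = sp ?q p * (a * ?T X + b * ?T Y)"
              using s1 e3 by simp
            also have "\<dots> = a * (sp ?q p * ?T X) + b * (sp ?q p * ?T Y)" by (simp add: algebra_simps)
            also have "\<dots> = a * (sg n z (X, m) * ?T X) + b * (sg n z (Y, m) * ?T Y)"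
              by (subst s2[symmetric], subst s3[symmetric], rule refl)
            finally show ?thesis .
          qed
          show ?case unfolding append_Nil SL_Dc_Cons e1 e2 key by (simp add: algebra_simps)
        next
          case (Cons v Q3)
          let ?f = "\<lambda>U. P r (R @ U)"
          have vz: "valid n (fst z)" using less.prems \<open>Q = z # Q'\<close> by simp
          have e1: "?f (bl n z v # Q3 @ (lc a X b Y, m) # W) =
              a * ?f (bl n z v # Q3 @ (X, m) # W) + b * ?f (bl n z v # Q3 @ (Y, m) # W)"
            using IH[where Q="R @ bl n z v # Q3" and W=W and X=X and Y=Y and a=a and b=b and p=p and m=m and r=r] Cons.prems less.prems \<open>Q = z # Q'\<close> vz
            by (simp add: bl_def valid_sbr)
          have e2: "?f (Q3 @ (lc a X b Y, m) # W) = a * ?f (Q3 @ (X, m) # W) + b * ?f (Q3 @ (Y, m) # W)"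
            using IH[where Q="R @ Q3" and W=W and X=X and Y=Y and a=a and b=b and p=p and m=m and r=r] Cons.prems less.prems \<open>Q = z # Q'\<close>
            by simp
          have e3: "SL (\<lambda>U. ?f (v # U)) (Dc n z (Q3 @ (lc a X b Y, m) # W)) =
              a * SL (\<lambda>U. ?f (v # U)) (Dc n z (Q3 @ (X, m) # W)) + b * SL (\<lambda>U. ?f (v # U)) (Dc n z (Q3 @ (Y, m) # W))"
            using Cons.IH[where R="R @ [v]"] Cons.prems by simp
          show ?case unfolding append_Cons SL_Dc_Cons
            using e1 e2 e3 by (simp add: algebra_simps)
        qed
      qed
      have "SL (P r) (Dc n z (Q' @ (lc a X b Y, m) # W)) =
          a * SL (P r) (Dc n z (Q' @ (X, m) # W)) + b * SL (P r) (Dc n z (Q' @ (Y, m) # W))"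
        using inner[where R="[]" and Q''=Q'] less.prems Cons by simp
      then show ?thesis unfolding Cons append_Cons P_pos[OF False] .
    qed
  qed
qed

lemma ZERO:
  assumes "validw n Q" "validw n W"
  shows "P r (Q @ ((\<lambda>i j. 0), m) # W) = 0"
  using LIN[OF assms valid_zero valid_zero inC_zero inC_zero, of r 0 0 m] by (simp add: lc_zero)

end


lemma sbr_zero1: "sbr n (\<lambda>i j. 0) V = (\<lambda>i j. 0)" by (simp add: sbr_def mmul_def)
lemma sbr_zero2: "sbr n V (\<lambda>i j. 0) = (\<lambda>i j. 0)" by (simp add: sbr_def mmul_def)
lemma str_zero: "str n (\<lambda>i j. 0) = 0" by (simp add: str_def)

lemma sg_sym: "sg n a b = sg n b a" by (simp add: sg_def sgn_sym)
lemma sg_sq: "sg n a b * sg n a b = 1" by (simp add: sg_def sgn_sq)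

lemma sgfix_b2:
  assumes "valid n (fst a)" "valid n (fst b)" "fst (bl n a b) = (\<lambda>i j. 0) \<Longrightarrow> T = 0"
  shows "(sg n c (bl n a b) - sg n c a * sg n c b) * T = 0"
proof (cases "sbr n (fst a) (fst b) = zmat")
  case True then show ?thesis using assms(3) by (simp add: bl_def zmat_eq)
next
  case False then show ?thesis using sgn_sbr[OF assms(1,2) False] by (simp add: sg_def bl_def)
qed

lemma sgfix_b1:
  assumes "valid n (fst a)" "valid n (fst b)" "fst (bl n a b) = (\<lambda>i j. 0) \<Longrightarrow> T = 0"
  shows "(sg n (bl n a b) c - sg n a c * sg n b c) * T = 0"
proof (cases "sbr n (fst a) (fst b) = zmat")
  case True then show ?thesis using assms(3) by (simp add: bl_def zmat_eq)
next
  case False then show ?thesis using sgn_sbr1[OF assms(1,2) False] by (simp add: sg_def bl_def)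
qed

lemma om_par_l:
  assumes "valid n (fst a)" "valid n (fst b)"
  shows "om n a b * (sg n c a - sg n c b) = 0"
proof (cases "om n a b = 0")
  case True then show ?thesis by simp
next
  case False
  then have "str n (mmul n (fst a) (fst b)) \<noteq> 0" by (auto simp: om_def split: if_splits)
  then have "is_odd_mat n (fst a) = is_odd_mat n (fst b)" using str_nz_par assms by blast
  then show ?thesis by (simp add: sg_def sgn_sp)
qed

lemma om_sym_l:
  assumes "valid n (fst a)" "valid n (fst b)"
  shows "om n a b = - sg n a b * om n b a"
proof -
  obtain A p where a: "a = (A, p)" by (cases a)
  obtain B q where b: "b = (B, q)" by (cases b)
  have vA: "valid n A" and vB: "valid n B" using assms a b by auto
  have s: "str n (mmul n A B) = sgn n A B * str n (mmul n B A)"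
    by (rule str_swap_valid[OF vA vB])
  show ?thesis
  proof (cases "p + q = 0")
    case True then have "q = - p" by simp
    then show ?thesis using s by (simp add: om_def sg_def a b sgn_sym[of n B A])
  next
    case False then show ?thesis by (simp add: om_def a b add.commute)
  qed
qed

lemma om_pos_l: "0 \<le> snd a \<Longrightarrow> 0 \<le> snd b \<Longrightarrow> om n a b = 0"
  by (simp add: om_def)

lemma cocycle_l:
  assumes "valid n (fst z)" "valid n (fst x)" "valid n (fst y)"
  shows "om n (bl n z x) y + sg n z x * om n x (bl n z y) - om n z (bl n x y) = 0"
proof -
  obtain Z a where z: "z = (Z, a)" by (cases z)
  obtain X b where x: "x = (X, b)" by (cases x)
  obtain Y c where y: "y = (Y, c)" by (cases y)
  have vZ: "valid n Z" and vX: "valid n X" and vY: "valid n Y" using assms z x y by auto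
  let ?S = "str n (mmul n Z (sbr n X Y))"
  have i1: "str n (mmul n (sbr n Z X) Y) = ?S" by (rule str_invariant[OF vX vY vZ])
  have i2: "str n (mmul n X (sbr n Z Y)) = str n (mmul n (sbr n X Z) Y)"
    by (rule str_invariant[OF vZ vY vX, symmetric])
  have i3: "str n (mmul n (sbr n X Z) Y) = - sgn n Z X * ?S"
    unfolding sbr_antisym[of n X Z] mmul_lc1 str_lc i1 by simp
  have ss: "sgn n Z X * sgn n Z X = 1" by (rule sgn_sq)
  show ?thesis
  proof (cases "a + b + c = 0")
    case True
    have "of_int (a + b) * ?S + sgn n Z X * (of_int b * (- sgn n Z X * ?S)) - of_int a * ?S = 0"
      using ss by (simp add: algebra_simps)
    then show ?thesis using True unfolding om_def bl_def sg_def z x y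
      by (simp add: i1 i2 i3 add.assoc add.left_commute)
  next
    case False
    then show ?thesis unfolding om_def bl_def sg_def z x y by (simp add: add.assoc add.left_commute)
  qed
qed

context rmod begin

declare Dc.simps(2)[simp del]

lemma ZERO': "validw n Q \<Longrightarrow> validw n W \<Longrightarrow> fst x = (\<lambda>i j. 0) \<Longrightarrow> P r (Q @ x # W) = 0"
  using ZERO[of Q W r "snd x"] by (cases x) simp

lemma DcZero:
  assumes "validw n R" "validw n W" "fst x = (\<lambda>i j. 0)"
  shows "SL (\<lambda>V. P r (R @ V)) (Dc n x W) = 0"
  using assms
proof (induction W arbitrary: R)
  case Nil then show ?case by simp
next
  case (Cons v W)
  have "P r (R @ bl n x v # W) = 0"
    by (rule ZERO') (use Cons in \<open>auto simp: bl_def sbr_zero1\<close>)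
  moreover have "om n x v = 0" using Cons by (simp add: om_def mmul_zero1 str_zero)
  moreover have "SL (\<lambda>V. P r ((R @ [v]) @ V)) (Dc n x W) = 0" using Cons.IH[of "R @ [v]"] Cons.prems by simp
  ultimately show ?case by (simp add: SL_Dc_Cons)
qed

lemma SL_lin4: "(\<And>W. W \<in> snd ` set d \<Longrightarrow> f1 W - s * f2 W = f3 W + c * f4 W) \<Longrightarrow>
   SL f1 d - s * SL f2 d = SL f3 d + c * SL f4 d"
  by (induction d) (auto simp: algebra_simps)

lemma jac_l:
  assumes "validw n R" "validw n W" "valid n (fst z)" "valid n (fst x)" "valid n (fst y)"
  shows "P r (R @ bl n z (bl n x y) # W) = P r (R @ bl n (bl n z x) y # W) + sg n z x * P r (R @ bl n x (bl n z y) # W)"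
proof -
  obtain Z a where z: "z = (Z, a)" by (cases z)
  obtain X b where x: "x = (X, b)" by (cases x)
  obtain Y c where y: "y = (Y, c)" by (cases y)
  have vZ: "valid n Z" and vX: "valid n X" and vY: "valid n Y" using assms z x y by auto
  let ?zo = "is_odd_mat n Z" and ?xo = "is_odd_mat n X" and ?yo = "is_odd_mat n Y"
  have cA: "inC n ((?zo \<noteq> ?xo) \<noteq> ?yo) (sbr n (sbr n Z X) Y)"
    using inC_sbr[OF valid_sbr[OF vZ vX] vY] inC_sbr[OF vZ vX] inC_par by (cases "sbr n Z X = zmat") (auto simp: zmat_eq sbr_zero1 inC_zero)
  have cB: "inC n ((?zo \<noteq> ?xo) \<noteq> ?yo) (sbr n X (sbr n Z Y))"
  proof -
    have "inC n (?xo \<noteq> is_odd_mat n (sbr n Z Y)) (sbr n X (sbr n Z Y))"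
      using inC_sbr[OF vX valid_sbr[OF vZ vY]] .
    then show ?thesis
      using inC_par[OF inC_sbr[OF vZ vY]] by (cases "sbr n Z Y = zmat") (auto simp: zmat_eq sbr_zero2 inC_zero)
  qed
  have m: "a + (b + c) = (a + b) + c" "b + (a + c) = (a + b) + c" by simp_all
  show ?thesis
    unfolding z x y bl_def fst_conv snd_conv jacobi[OF vX vY vZ] m sg_def
    using LIN[OF assms(1,2) valid_sbr[OF valid_sbr[OF vZ vX] vY] valid_sbr[OF vX valid_sbr[OF vZ vY]] cA cB,
      of r 1 "sgn n Z X" "a + b + c"] by simp
qed

lemma L0: "0 \<le> snd x \<Longrightarrow> P r (Q @ [x]) = 0"
proof (induction "length Q" arbitrary: Q r x rule: less_induct)
  case less
  show ?case
  proof (cases Q)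
    case Nil then show ?thesis using less.prems by (simp add: P_pos)
  next
    case (Cons z Q')
    show ?thesis
    proof (cases "snd z < 0")
      case True then show ?thesis using less Cons by simp
    next
      case False
      have inner: "\<And>Q'' R. length R + length Q'' = length Q' \<Longrightarrow> SL (\<lambda>V. P r (R @ V)) (Dc n z (Q'' @ [x])) = 0"
      proof -
        fix Q'' R show "length R + length Q'' = length Q' \<Longrightarrow> SL (\<lambda>V. P r (R @ V)) (Dc n z (Q'' @ [x])) = 0"
        proof (induction Q'' arbitrary: R)
          case Nil
          have "P r (R @ [bl n z x]) = 0" using less.hyps[where Q=R and x="bl n z x"] less.prems Nil Cons False by (simp add: bl_def)
          moreover have "om n z x = 0" using False less.prems by (simp add: om_pos_l)
          ultimately show ?case by (simp add: SL_Dc_Cons)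
        next
          case (Cons v Q3)
          have "P r (R @ bl n z v # Q3 @ [x]) = 0" using less.hyps[where Q="R @ bl n z v # Q3" and x=x] less.prems Cons \<open>Q = z # Q'\<close> by simp
          moreover have "P r (R @ Q3 @ [x]) = 0" using less.hyps[where Q="R @ Q3" and x=x] less.prems Cons \<open>Q = z # Q'\<close> by simp
          moreover have "SL (\<lambda>V. P r ((R @ [v]) @ V)) (Dc n z (Q3 @ [x])) = 0" using Cons.IH[of "R @ [v]"] Cons.prems by simp
          ultimately show ?case by (simp add: SL_Dc_Cons)
        qed
      qed
      show ?thesis unfolding Cons append_Cons P_pos[OF False] using inner[where R="[]" and Q''=Q'] by simp
    qed
  qed
qed

end

lemma mmul_idm1: "is_mat n V \<Longrightarrow> mmul n (idm n) V = V"
proof (rule ext, rule ext)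
  fix i j assume m: "is_mat n V"
  have "mmul n (idm n) V i j = (\<Sum>k\<in>{1..2*n}. if k = i then V i j else 0)"
    unfolding mmul_def idm_def by (rule sum.cong) auto
  also have "\<dots> = (if i \<in> {1..2*n} then V i j else 0)" by (simp add: sum.delta')
  also have "\<dots> = V i j" using m unfolding is_mat_def by auto
  finally show "mmul n (idm n) V i j = V i j" .
qed

lemma mmul_idm2: "is_mat n V \<Longrightarrow> mmul n V (idm n) = V"
proof (rule ext, rule ext)
  fix i j assume m: "is_mat n V"
  have "mmul n V (idm n) i j = (\<Sum>k\<in>{1..2*n}. if k = j then V i j else 0)"
    unfolding mmul_def idm_def by (rule sum.cong) auto
  also have "\<dots> = (if j \<in> {1..2*n} then V i j else 0)" by (simp add: sum.delta')
  also have "\<dots> = V i j" using m unfolding is_mat_def by auto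
  finally show "mmul n V (idm n) i j = V i j" .
qed

lemma idm_not_odd: "0 < n \<Longrightarrow> \<not> is_odd_mat n (idm n)"
  unfolding is_odd_iff by (auto simp: idm_def odd_entry_def intro!: exI[of _ 1])

lemma sbr_idm1: "0 < n \<Longrightarrow> valid n V \<Longrightarrow> sbr n (idm n) V = (\<lambda>i j. 0)"
  by (simp add: sbr_def sgn_def idm_not_odd mmul_idm1 mmul_idm2 valid_ismat)
lemma sbr_idm2: "0 < n \<Longrightarrow> valid n V \<Longrightarrow> sbr n V (idm n) = (\<lambda>i j. 0)"
  by (simp add: sbr_def sgn_def idm_not_odd mmul_idm1 mmul_idm2 valid_ismat)
lemma str_idm1: "valid n V \<Longrightarrow> str n (mmul n (idm n) V) = 0"
  by (simp add: mmul_idm1 valid_ismat) (simp add: valid_def sl_def)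
lemma str_idm2: "valid n V \<Longrightarrow> str n (mmul n V (idm n)) = 0"
  by (simp add: mmul_idm2 valid_ismat) (simp add: valid_def sl_def)

context rmod begin

lemma CENT: "validw n Q \<Longrightarrow> validw n W \<Longrightarrow> P r (Q @ (idm n, m) # W) = 0"
proof (induction "length Q + length W" arbitrary: Q W r rule: less_induct)
  case less
  show ?case
  proof (cases Q)
    case Nil
    show ?thesis
    proof (cases "m < 0")
      case True then show ?thesis using Nil by (simp add: act_idm P_zero_state)
    next
      case False
      have inner: "\<And>W' R. validw n R \<Longrightarrow> validw n W' \<Longrightarrow> SL (\<lambda>V. P r (R @ V)) (Dc n (idm n, m) W') = 0"
      proof -
        fix W' R show "validw n R \<Longrightarrow> validw n W' \<Longrightarrow> SL (\<lambda>V. P r (R @ V)) (Dc n (idm n, m) W') = 0"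
        proof (induction W' arbitrary: R)
          case Nil then show ?case by simp
        next
          case (Cons v W'')
          have "P r (R @ bl n (idm n, m) v # W'') = 0"
            by (rule ZERO') (use Cons n_pos in \<open>auto simp: bl_def sbr_idm1\<close>)
          moreover have "om n (idm n, m) v = 0" using Cons by (simp add: om_def str_idm1)
          moreover have "SL (\<lambda>V. P r ((R @ [v]) @ V)) (Dc n (idm n, m) W'') = 0" using Cons.IH[of "R @ [v]"] Cons.prems by simp
          ultimately show ?case by (simp add: SL_Dc_Cons)
        qed
      qed
      have pp: "P r ((idm n, m) # W) = SL (P r) (Dc n (idm n, m) W)" by (rule P_pos) (simp add: False)
      show ?thesis unfolding Nil append_Nil pp using inner[where R="[]" and W'=W] less.prems by simp
    qed
  next
    case (Cons z Q')
    show ?thesis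
    proof (cases "snd z < 0")
      case True then show ?thesis using less Cons by simp
    next
      case False
      have vz: "valid n (fst z)" using less.prems Cons by simp
      have inner: "\<And>Q'' R. length R + length Q'' = length Q' \<Longrightarrow> validw n R \<Longrightarrow> validw n Q'' \<Longrightarrow>
         SL (\<lambda>V. P r (R @ V)) (Dc n z (Q'' @ (idm n, m) # W)) = 0"
      proof -
        fix Q'' R show "length R + length Q'' = length Q' \<Longrightarrow> validw n R \<Longrightarrow> validw n Q'' \<Longrightarrow>
         SL (\<lambda>V. P r (R @ V)) (Dc n z (Q'' @ (idm n, m) # W)) = 0"
        proof (induction Q'' arbitrary: R)
          case Nil
          have "P r (R @ bl n z (idm n, m) # W) = 0"
            by (rule ZERO') (use Nil less.prems vz n_pos in \<open>auto simp: bl_def sbr_idm2\<close>)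
          moreover have "om n z (idm n, m) = 0" using vz by (simp add: om_def str_idm2)
          moreover have "SL (\<lambda>V. P r (R @ (idm n, m) # V)) (Dc n z W) = 0"
          proof (rule SL_zero)
            fix U assume "U \<in> snd ` set (Dc n z W)"
            then obtain q where q: "q \<in> set (Dc n z W)" "U = snd q" by auto
            have "length U \<le> length W" "validw n U"
              using Dc_len[OF q(1)] Dc_valid[OF vz _ q(1)] less.prems q(2) by auto
            then show "P r (R @ (idm n, m) # U) = 0" using less.hyps[of R U] Nil Cons by simp
          qed
          ultimately show ?case by (simp add: SL_Dc_Cons)
        next
          case (Cons v Q3)
          have "P r (R @ bl n z v # Q3 @ (idm n, m) # W) = 0"
            using less.hyps[of "R @ bl n z v # Q3" W] less.prems Cons \<open>Q = z # Q'\<close> vz by (simp add: bl_def valid_sbr)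
          moreover have "P r (R @ Q3 @ (idm n, m) # W) = 0"
            using less.hyps[of "R @ Q3" W] less.prems Cons \<open>Q = z # Q'\<close> by simp
          moreover have "SL (\<lambda>V. P r ((R @ [v]) @ V)) (Dc n z (Q3 @ (idm n, m) # W)) = 0" using Cons.IH[of "R @ [v]"] Cons.prems by simp
          ultimately show ?case by (simp add: SL_Dc_Cons)
        qed
      qed
      show ?thesis unfolding Cons append_Cons P_pos[OF False] using inner[where R="[]" and Q''=Q'] less.prems Cons by simp
    qed
  qed
qed

lemma SL_words:
  assumes "valid n (fst z)" "validw n w" "\<And>U. length U \<le> length w \<Longrightarrow> validw n U \<Longrightarrow> f U = 0"
  shows "SL f (Dc n z w) = 0"
proof (rule SL_zero)
  fix U assume "U \<in> snd ` set (Dc n z w)"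
  then obtain q where q: "q \<in> set (Dc n z w)" "U = snd q" by auto
  show "f U = 0" using assms(3) Dc_len[OF q(1)] Dc_valid[OF assms(1,2) q(1)] q(2) by auto
qed

lemma SL_words4:
  assumes "valid n (fst z)" "validw n w"
    "\<And>U. length U \<le> length w \<Longrightarrow> validw n U \<Longrightarrow> f1 U - s * f2 U = f3 U + c * f4 U"
  shows "SL f1 (Dc n z w) - s * SL f2 (Dc n z w) = SL f3 (Dc n z w) + c * SL f4 (Dc n z w)"
proof (rule SL_lin4)
  fix U assume "U \<in> snd ` set (Dc n z w)"
  then obtain q where q: "q \<in> set (Dc n z w)" "U = snd q" by auto
  show "f1 U - s * f2 U = f3 U + c * f4 U" using assms(3) Dc_len[OF q(1)] Dc_valid[OF assms(1,2) q(1)] q(2) by auto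
qed

lemma DD:
  assumes "valid n (fst x)" "valid n (fst y)" "validw n w" "validw n R"
  shows "SL (\<lambda>W. SL (\<lambda>V. P r (R @ V)) (Dc n y W)) (Dc n x w)
      - sg n x y * SL (\<lambda>W. SL (\<lambda>V. P r (R @ V)) (Dc n x W)) (Dc n y w)
      = SL (\<lambda>V. P r (R @ V)) (Dc n (bl n y x) w)"
  using assms
proof (induction w arbitrary: R)
  case Nil then show ?case by simp
next
  case (Cons v w)
  let ?f = "\<lambda>V. P r (R @ V)"
  have vx: "valid n (fst x)" and vy: "valid n (fst y)" and vv: "valid n (fst v)" and vw: "validw n w"
    and vR: "validw n R" using Cons.prems by auto
  have vbxv: "valid n (fst (bl n x v))" and vbyv: "valid n (fst (bl n y v))" and vbyx: "valid n (fst (bl n y x))"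
    using vx vy vv by (auto simp: bl_def valid_sbr)
  have ex1: "SL (\<lambda>W. SL ?f (Dc n y W)) (Dc n x (v # w)) =
     ?f (bl n y (bl n x v) # w) + om n y (bl n x v) * ?f w + sg n y (bl n x v) * SL (\<lambda>V. ?f (bl n x v # V)) (Dc n y w)
     + om n x v * SL ?f (Dc n y w)
     + sg n x v * (SL (\<lambda>W. ?f (bl n y v # W)) (Dc n x w) + om n y v * SL ?f (Dc n x w)
        + sg n y v * SL (\<lambda>W. SL (\<lambda>V. ?f (v # V)) (Dc n y W)) (Dc n x w))"
    by (simp add: SL_Dc_Cons SL_add SL_scale algebra_simps)
  have ex2: "SL (\<lambda>W. SL ?f (Dc n x W)) (Dc n y (v # w)) =
     ?f (bl n x (bl n y v) # w) + om n x (bl n y v) * ?f w + sg n x (bl n y v) * SL (\<lambda>V. ?f (bl n y v # V)) (Dc n x w)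
     + om n y v * SL ?f (Dc n x w)
     + sg n y v * (SL (\<lambda>W. ?f (bl n x v # W)) (Dc n y w) + om n x v * SL ?f (Dc n y w)
        + sg n x v * SL (\<lambda>W. SL (\<lambda>V. ?f (v # V)) (Dc n x W)) (Dc n y w))"
    by (simp add: SL_Dc_Cons SL_add SL_scale algebra_simps)
  have ex3: "SL ?f (Dc n (bl n y x) (v # w)) = ?f (bl n (bl n y x) v # w) + om n (bl n y x) v * ?f w
      + sg n (bl n y x) v * SL (\<lambda>V. ?f (v # V)) (Dc n (bl n y x) w)"
    by (simp add: SL_Dc_Cons)
  have ih: "SL (\<lambda>W. SL (\<lambda>V. ?f (v # V)) (Dc n y W)) (Dc n x w) - sg n x y * SL (\<lambda>W. SL (\<lambda>V. ?f (v # V)) (Dc n x W)) (Dc n y w)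
     = SL (\<lambda>V. ?f (v # V)) (Dc n (bl n y x) w)"
    using Cons.IH[of "R @ [v]"] Cons.prems by simp
  have J: "?f (bl n y (bl n x v) # w) = ?f (bl n (bl n y x) v # w) + sg n y x * ?f (bl n x (bl n y v) # w)"
    by (rule jac_l[OF vR vw vy vx vv])
  have C: "om n (bl n y x) v + sg n y x * om n x (bl n y v) - om n y (bl n x v) = 0"
    by (rule cocycle_l[OF vy vx vv])
  have S1: "(sg n y (bl n x v) - sg n y x * sg n y v) * SL (\<lambda>V. ?f (bl n x v # V)) (Dc n y w) = 0"
  proof (rule sgfix_b2[OF vx vv])
    assume "fst (bl n x v) = (\<lambda>i j. 0)"
    then show "SL (\<lambda>V. ?f (bl n x v # V)) (Dc n y w) = 0"
      using SL_words[OF vy vw, of "\<lambda>V. ?f (bl n x v # V)"] ZERO'[OF vR] by simp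
  qed
  have S2: "(sg n x (bl n y v) - sg n x y * sg n x v) * SL (\<lambda>V. ?f (bl n y v # V)) (Dc n x w) = 0"
  proof (rule sgfix_b2[OF vy vv])
    assume "fst (bl n y v) = (\<lambda>i j. 0)"
    then show "SL (\<lambda>V. ?f (bl n y v # V)) (Dc n x w) = 0"
      using SL_words[OF vx vw, of "\<lambda>V. ?f (bl n y v # V)"] ZERO'[OF vR] by simp
  qed
  have S3: "(sg n (bl n y x) v - sg n y v * sg n x v) * SL (\<lambda>V. ?f (v # V)) (Dc n (bl n y x) w) = 0"
  proof (rule sgfix_b1[OF vy vx])
    assume "fst (bl n y x) = (\<lambda>i j. 0)"
    then show "SL (\<lambda>V. ?f (v # V)) (Dc n (bl n y x) w) = 0"
      using DcZero[of "R @ [v]" w "bl n y x" r] vR vv vw by simp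
  qed
  have O1: "om n x v * (sg n y x - sg n y v) = 0" by (rule om_par_l[OF vx vv])
  have O2: "om n y v * (sg n x y - sg n x v) = 0" by (rule om_par_l[OF vy vv])
  have q1: "sg n y x = sg n x y" by (rule sg_sym)
  have q2: "sg n x y * sg n x y = 1" "sg n x v * sg n x v = 1" "sg n y v * sg n y v = 1" by (simp_all add: sg_sq)
  show ?case unfolding ex1 ex2 ex3
    using J C S1 S2 S3 O1 O2 q1 q2 ih by algebra
qed

end

context rmod begin

lemma R3:
  assumes "validw n u" "validw n w" "valid n (fst x)" "valid n (fst y)"
  shows "P r (u @ x # y # w) - sg n x y * P r (u @ y # x # w) = P r (u @ bl n x y # w) + om n x y * P r (u @ w)"
  using assms
proof (induction "length u + length w" arbitrary: u w x y r rule: less_induct)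
  case less
  note IH = less.hyps
  have vx: "valid n (fst x)" and vy: "valid n (fst y)" and vw: "validw n w" and vu: "validw n u"
    using less.prems by auto
  have vb: "valid n (fst (bl n x y))" using vx vy by (simp add: bl_def valid_sbr)
  show ?case
  proof (cases u)
    case Nil
    show ?thesis
    proof (cases "snd x < 0"; cases "snd y < 0")
      assume hx: "snd x < 0" and hy: "snd y < 0"
      have hb: "snd (bl n x y) < 0" using hx hy by (simp add: bl_def)
      have o: "om n x y = 0" using hx hy by (simp add: om_def)
      obtain X a where x: "x = (X, a)" by (cases x)
      obtain Y b where y: "y = (Y, b)" by (cases y)
      have am: "act y (act x r) = (\<lambda>i. sg n x y * act x (act y r) i + act (bl n x y) r i)"
        using act_mod[of X Y a b r] vx vy hx hy x y by (simp add: sg_def bl_def)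
      have "P r (x # y # w) = sg n x y * P r (y # x # w) + P r (bl n x y # w)"
        using hx hy hb P_slin[of "sg n x y" "act x (act y r)" 1 "act (bl n x y) r" w] by (simp add: am)
      then show ?thesis using Nil o by simp
    next
      assume hx: "\<not> snd x < 0" and hy: "snd y < 0"
      have e1: "P r (x # y # w) = P r (bl n x y # w) + om n x y * P r w + sg n x y * SL (\<lambda>V. P r (y # V)) (Dc n x w)"
        unfolding P_pos[OF hx] SL_Dc_Cons by simp
      have e2: "SL (\<lambda>V. P r (y # V)) (Dc n x w) = SL (P (act y r)) (Dc n x w)"
        unfolding P_neg[OF hy] by (rule refl)
      have e3: "P r (y # x # w) = SL (P (act y r)) (Dc n x w)"
        unfolding P_neg[OF hy] by (rule P_pos[OF hx])
      show ?thesis using Nil e1 e2 e3 by simp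
    next
      assume hx: "snd x < 0" and hy: "\<not> snd y < 0"
      have e1: "P r (x # y # w) = SL (P (act x r)) (Dc n y w)"
        unfolding P_neg[OF hx] by (rule P_pos[OF hy])
      have e2: "P r (y # x # w) = P r (bl n y x # w) + om n y x * P r w + sg n y x * SL (\<lambda>V. P r (x # V)) (Dc n y w)"
        unfolding P_pos[OF hy] SL_Dc_Cons by simp
      have e3: "SL (\<lambda>V. P r (x # V)) (Dc n y w) = SL (P (act x r)) (Dc n y w)"
        unfolding P_neg[OF hx] by (rule refl)
      obtain X a where x: "x = (X, a)" by (cases x)
      obtain Y b where y: "y = (Y, b)" by (cases y)
      have cl: "inC n (is_odd_mat n X \<noteq> is_odd_mat n Y) (sbr n X Y)" using inC_sbr vx vy x y by simp
      have vs: "valid n (sbr n X Y)" using valid_sbr vx vy x y by simp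
      have e4: "P r (bl n y x # w) = - sg n x y * P r (bl n x y # w)"
        using LIN[of "[]" w "sbr n X Y" "sbr n X Y" _ r "- sgn n X Y" 0 "a + b"] vw vs cl
        unfolding bl_def x y fst_conv snd_conv sbr_antisym[of n Y X] sg_def by (simp add: add.commute)
      have e5: "om n x y = - sg n x y * om n y x" by (rule om_sym_l[OF vx vy])
      have q: "sg n x y * sg n x y = 1" "sg n y x = sg n x y" by (simp_all add: sg_sq sg_sym)
      show ?thesis unfolding Nil append_Nil e1 e2 e3 e4 e5 using q by algebra
    next
      assume hx: "\<not> snd x < 0" and hy: "\<not> snd y < 0"
      have e1: "P r (x # y # w) = P r (bl n x y # w) + om n x y * P r w + sg n x y * SL (\<lambda>W. SL (P r) (Dc n y W)) (Dc n x w)"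
        unfolding P_pos[OF hx] SL_Dc_Cons P_pos[OF hy] by simp
      have e2: "P r (y # x # w) = P r (bl n y x # w) + om n y x * P r w + sg n y x * SL (\<lambda>W. SL (P r) (Dc n x W)) (Dc n y w)"
        unfolding P_pos[OF hy] SL_Dc_Cons P_pos[OF hx] by simp
      have hb: "\<not> snd (bl n y x) < 0" using hx hy by (simp add: bl_def)
      have e3: "P r (bl n y x # w) = SL (P r) (Dc n (bl n y x) w)" by (rule P_pos[OF hb])
      have e4: "om n y x = 0" using hx hy by (simp add: om_def)
      have dd: "SL (\<lambda>W. SL (P r) (Dc n y W)) (Dc n x w) - sg n x y * SL (\<lambda>W. SL (P r) (Dc n x W)) (Dc n y w)
          = SL (P r) (Dc n (bl n y x) w)"
        using DD[OF vx vy vw, of "[]" r] by simp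
      have q: "sg n x y * sg n x y = 1" "sg n y x = sg n x y" by (simp_all add: sg_sq sg_sym)
      show ?thesis unfolding Nil append_Nil e1 e2 e3 e4 using q dd by algebra
    qed
  next
    case (Cons z u')
    have vz: "valid n (fst z)" and vu': "validw n u'" using less.prems Cons by auto
    show ?thesis
    proof (cases "snd z < 0")
      case True
      then show ?thesis using IH[of u' w x y "act z r"] less.prems Cons by simp
    next
      case False
      let ?s = "sg n x y" and ?o = "om n x y"
      have inner: "\<And>u'' R. length R + length u'' = length u' \<Longrightarrow> validw n R \<Longrightarrow> validw n u'' \<Longrightarrow>
        SL (\<lambda>V. P r (R @ V)) (Dc n z (u'' @ x # y # w)) - ?s * SL (\<lambda>V. P r (R @ V)) (Dc n z (u'' @ y # x # w))
        = SL (\<lambda>V. P r (R @ V)) (Dc n z (u'' @ bl n x y # w)) + ?o * SL (\<lambda>V. P r (R @ V)) (Dc n z (u'' @ w))"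
      proof -
        fix u'' R
        show "length R + length u'' = length u' \<Longrightarrow> validw n R \<Longrightarrow> validw n u'' \<Longrightarrow>
          SL (\<lambda>V. P r (R @ V)) (Dc n z (u'' @ x # y # w)) - ?s * SL (\<lambda>V. P r (R @ V)) (Dc n z (u'' @ y # x # w))
          = SL (\<lambda>V. P r (R @ V)) (Dc n z (u'' @ bl n x y # w)) + ?o * SL (\<lambda>V. P r (R @ V)) (Dc n z (u'' @ w))"
        proof (induction u'' arbitrary: R)
          case Nil
          let ?f = "\<lambda>V. P r (R @ V)"
          have vR: "validw n R" using Nil by simp
          have lR: "length R = length u'" using Nil by simp
          have vzx: "valid n (fst (bl n z x))" and vzy: "valid n (fst (bl n z y))" and vxy: "valid n (fst (bl n x y))"
            using vz vx vy by (auto simp: bl_def valid_sbr)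
          have ex1: "SL ?f (Dc n z (x # y # w)) = ?f (bl n z x # y # w) + om n z x * ?f (y # w)
             + sg n z x * (?f (x # bl n z y # w) + om n z y * ?f (x # w) + sg n z y * SL (\<lambda>V. ?f (x # y # V)) (Dc n z w))"
            by (simp add: SL_Dc_Cons)
          have ex2: "SL ?f (Dc n z (y # x # w)) = ?f (bl n z y # x # w) + om n z y * ?f (x # w)
             + sg n z y * (?f (y # bl n z x # w) + om n z x * ?f (y # w) + sg n z x * SL (\<lambda>V. ?f (y # x # V)) (Dc n z w))"
            by (simp add: SL_Dc_Cons)
          have ex3: "SL ?f (Dc n z (bl n x y # w)) = ?f (bl n z (bl n x y) # w) + om n z (bl n x y) * ?f w
             + sg n z (bl n x y) * SL (\<lambda>V. ?f (bl n x y # V)) (Dc n z w)"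
            by (simp add: SL_Dc_Cons)
          have H1: "SL (\<lambda>V. ?f (x # y # V)) (Dc n z w) - ?s * SL (\<lambda>V. ?f (y # x # V)) (Dc n z w)
              = SL (\<lambda>V. ?f (bl n x y # V)) (Dc n z w) + ?o * SL ?f (Dc n z w)"
          proof (rule SL_words4[OF vz vw])
            fix U assume "length U \<le> length w" "validw n U"
            then show "?f (x # y # U) - ?s * ?f (y # x # U) = ?f (bl n x y # U) + ?o * ?f U"
              using IH[of R U x y r] lR vR vx vy Cons by simp
          qed
          have H2: "?f (bl n z x # y # w) - sg n (bl n z x) y * ?f (y # bl n z x # w) = ?f (bl n (bl n z x) y # w) + om n (bl n z x) y * ?f w"
            using IH[of R w "bl n z x" y r] lR vR vzx vy vw Cons by simp
          have H3: "?f (x # bl n z y # w) - sg n x (bl n z y) * ?f (bl n z y # x # w) = ?f (bl n x (bl n z y) # w) + om n x (bl n z y) * ?f w"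
            using IH[of R w x "bl n z y" r] lR vR vzy vx vw Cons by simp
          have J: "?f (bl n z (bl n x y) # w) = ?f (bl n (bl n z x) y # w) + sg n z x * ?f (bl n x (bl n z y) # w)"
            by (rule jac_l[OF vR vw vz vx vy])
          have C: "om n (bl n z x) y + sg n z x * om n x (bl n z y) - om n z (bl n x y) = 0"
            by (rule cocycle_l[OF vz vx vy])
          have Z1: "(sg n (bl n z x) y - sg n z y * sg n x y) * ?f (y # bl n z x # w) = 0"
            by (rule sgfix_b1[OF vz vx]) (use ZERO'[of "R @ [y]" w "bl n z x" r] vR vy vw in simp)
          have Z2: "(sg n x (bl n z y) - sg n x z * sg n x y) * ?f (bl n z y # x # w) = 0"
            by (rule sgfix_b2[OF vz vy]) (use ZERO'[of R "x # w" "bl n z y" r] vR vx vw in simp)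
          have Z3: "(sg n z (bl n x y) - sg n z x * sg n z y) * SL (\<lambda>V. ?f (bl n x y # V)) (Dc n z w) = 0"
          proof (rule sgfix_b2[OF vx vy])
            assume "fst (bl n x y) = (\<lambda>i j. 0)"
            then show "SL (\<lambda>V. ?f (bl n x y # V)) (Dc n z w) = 0"
              using SL_words[OF vz vw, of "\<lambda>V. ?f (bl n x y # V)"] ZERO'[OF vR] by simp
          qed
          have O1: "om n z x * (sg n y z - sg n y x) = 0" by (rule om_par_l[OF vz vx])
          have O2: "om n z y * (sg n x z - sg n x y) = 0" by (rule om_par_l[OF vz vy])
          have O3: "om n x y * (sg n z x - sg n z y) = 0" by (rule om_par_l[OF vx vy])
          have q: "sg n y z = sg n z y" "sg n x z = sg n z x" "sg n y x = sg n x y"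
            "sg n z x * sg n z x = 1" "sg n z y * sg n z y = 1" "sg n x y * sg n x y = 1"
            by (simp_all add: sg_sym sg_sq)
          show ?case unfolding append_Nil ex1 ex2 ex3
            using H1 H2 H3 J C Z1 Z2 Z3 O1 O2 O3 q by algebra
        next
          case (Cons v u3)
          let ?f = "\<lambda>V. P r (R @ V)"
          have vR: "validw n R" and vv: "valid n (fst v)" and vu3: "validw n u3" using Cons.prems by auto
          have vzv: "valid n (fst (bl n z v))" using vz vv by (simp add: bl_def valid_sbr)
          have A: "?f (bl n z v # u3 @ x # y # w) - ?s * ?f (bl n z v # u3 @ y # x # w)
              = ?f (bl n z v # u3 @ bl n x y # w) + ?o * ?f (bl n z v # u3 @ w)"
            using IH[of "R @ bl n z v # u3" w x y r] Cons.prems vR vzv vu3 vw vx vy \<open>u = z # u'\<close> by simp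
          have B: "?f (u3 @ x # y # w) - ?s * ?f (u3 @ y # x # w) = ?f (u3 @ bl n x y # w) + ?o * ?f (u3 @ w)"
            using IH[of "R @ u3" w x y r] Cons.prems vR vu3 vw vx vy \<open>u = z # u'\<close> by simp
          have C: "SL (\<lambda>V. ?f (v # V)) (Dc n z (u3 @ x # y # w)) - ?s * SL (\<lambda>V. ?f (v # V)) (Dc n z (u3 @ y # x # w))
              = SL (\<lambda>V. ?f (v # V)) (Dc n z (u3 @ bl n x y # w)) + ?o * SL (\<lambda>V. ?f (v # V)) (Dc n z (u3 @ w))"
            using Cons.IH[of "R @ [v]"] Cons.prems by simp
          show ?case unfolding append_Cons SL_Dc_Cons using A B C by algebra
        qed
      qed
      have "SL (P r) (Dc n z (u' @ x # y # w)) - ?s * SL (P r) (Dc n z (u' @ y # x # w))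
          = SL (P r) (Dc n z (u' @ bl n x y # w)) + ?o * SL (P r) (Dc n z (u' @ w))"
        using inner[where R="[]" and u''=u'] vu' by simp
      then show ?thesis unfolding Cons append_Cons P_pos[OF False] .
    qed
  qed
qed

end


definition LinF :: "(word \<Rightarrow> complex) \<Rightarrow> falg \<Rightarrow> complex" where
  "LinF F a = (\<Sum>u\<in>{u. a u \<noteq> 0}. a u * F u)"

definition Good :: "(word \<Rightarrow> complex) \<Rightarrow> falg \<Rightarrow> bool" where
  "Good F a \<longleftrightarrow> finite {u. a u \<noteq> 0} \<and> LinF F a = 0"

lemma LinF_eq: "finite S \<Longrightarrow> {u. a u \<noteq> 0} \<subseteq> S \<Longrightarrow> LinF F a = (\<Sum>u\<in>S. a u * F u)"
  unfolding LinF_def by (rule sum.mono_neutral_left) auto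

lemma fin_fadd: "finite {u. a u \<noteq> 0} \<Longrightarrow> finite {u. b u \<noteq> 0} \<Longrightarrow> finite {u. fadd a b u \<noteq> 0}"
  by (rule finite_subset[of _ "{u. a u \<noteq> 0} \<union> {u. b u \<noteq> 0}"]) (auto simp: fadd_def)
lemma fin_fsub: "finite {u. a u \<noteq> 0} \<Longrightarrow> finite {u. b u \<noteq> 0} \<Longrightarrow> finite {u. fsub a b u \<noteq> 0}"
  by (rule finite_subset[of _ "{u. a u \<noteq> 0} \<union> {u. b u \<noteq> 0}"]) (auto simp: fsub_def)
lemma fin_fscale: "finite {u. a u \<noteq> 0} \<Longrightarrow> finite {u. fscale c a u \<noteq> 0}"
  by (rule finite_subset[of _ "{u. a u \<noteq> 0}"]) (auto simp: fscale_def)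
lemma fin_mono: "finite {u. mono w u \<noteq> 0}"
  by (rule finite_subset[of _ "{w}"]) (auto simp: mono_def)

lemma LinF_fadd: "finite {u. a u \<noteq> 0} \<Longrightarrow> finite {u. b u \<noteq> 0} \<Longrightarrow> LinF F (fadd a b) = LinF F a + LinF F b"
proof -
  assume fa: "finite {u. a u \<noteq> 0}" and fb: "finite {u. b u \<noteq> 0}"
  let ?S = "{u. a u \<noteq> 0} \<union> {u. b u \<noteq> 0}"
  have "LinF F (fadd a b) = (\<Sum>u\<in>?S. fadd a b u * F u)" by (rule LinF_eq) (use fa fb in \<open>auto simp: fadd_def\<close>)
  also have "\<dots> = (\<Sum>u\<in>?S. a u * F u) + (\<Sum>u\<in>?S. b u * F u)" by (simp add: fadd_def sum.distrib algebra_simps)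
  also have "\<dots> = LinF F a + LinF F b" using LinF_eq[of ?S a F] LinF_eq[of ?S b F] fa fb by auto
  finally show ?thesis .
qed

lemma LinF_fsub: "finite {u. a u \<noteq> 0} \<Longrightarrow> finite {u. b u \<noteq> 0} \<Longrightarrow> LinF F (fsub a b) = LinF F a - LinF F b"
proof -
  assume fa: "finite {u. a u \<noteq> 0}" and fb: "finite {u. b u \<noteq> 0}"
  let ?S = "{u. a u \<noteq> 0} \<union> {u. b u \<noteq> 0}"
  have "LinF F (fsub a b) = (\<Sum>u\<in>?S. fsub a b u * F u)" by (rule LinF_eq) (use fa fb in \<open>auto simp: fsub_def\<close>)
  also have "\<dots> = (\<Sum>u\<in>?S. a u * F u) - (\<Sum>u\<in>?S. b u * F u)" by (simp add: fsub_def sum_subtractf algebra_simps)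
  also have "\<dots> = LinF F a - LinF F b" using LinF_eq[of ?S a F] LinF_eq[of ?S b F] fa fb by auto
  finally show ?thesis .
qed

lemma LinF_fscale: "finite {u. a u \<noteq> 0} \<Longrightarrow> LinF F (fscale c a) = c * LinF F a"
proof -
  assume fa: "finite {u. a u \<noteq> 0}"
  have "LinF F (fscale c a) = (\<Sum>u\<in>{u. a u \<noteq> 0}. fscale c a u * F u)" by (rule LinF_eq) (use fa in \<open>auto simp: fscale_def\<close>)
  also have "\<dots> = c * LinF F a" by (simp add: LinF_def fscale_def sum_distrib_left algebra_simps)
  finally show ?thesis .
qed

lemma LinF_mono: "LinF F (mono w) = F w"
proof -
  have "LinF F (mono w) = (\<Sum>u\<in>{w}. mono w u * F u)" by (rule LinF_eq) (auto simp: mono_def)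
  then show ?thesis by (simp add: mono_def)
qed

lemma LinF_zero: "LinF F (\<lambda>_. 0) = 0" by (simp add: LinF_def)

lemma Good_Jid:
  assumes relF: "\<And>r u w. r \<in> rels n \<Longrightarrow> validw n u \<Longrightarrow> validw n w \<Longrightarrow> Good F (fmul (mono u) (fmul r (mono w)))"
  and annF: "\<And>u X m. validw n u \<Longrightarrow> valid n X \<Longrightarrow> 0 \<le> m \<Longrightarrow> Good F (fmul (mono u) (mono [(X, m)]))"
  shows "a \<in> Jid n \<Longrightarrow> Good F a"
proof (induction rule: Jid.induct)
  case zero then show ?case by (simp add: Good_def LinF_zero)
next
  case (add a b) then show ?case by (simp add: Good_def LinF_fadd fin_fadd)
next
  case (scale a c) then show ?case by (simp add: Good_def LinF_fscale fin_fscale)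
next
  case (rel r u w) then show ?case using relF by blast
next
  case (ann u X m) then show ?case using annF by blast
qed

lemma split_finite: "finite {(v1, v2). v1 @ v2 = (v :: 'a list)}"
proof (rule finite_subset[of _ "(\<lambda>k. (take k v, drop k v)) ` {..length v}"])
  show "{(v1, v2). v1 @ v2 = v} \<subseteq> (\<lambda>k. (take k v, drop k v)) ` {..length v}"
  proof
    fix p assume "p \<in> {(v1, v2). v1 @ v2 = v}"
    then obtain v1 v2 where p: "p = (v1, v2)" "v1 @ v2 = v" by auto
    then show "p \<in> (\<lambda>k. (take k v, drop k v)) ` {..length v}"
      by (intro image_eqI[of _ _ "length v1"]) auto
  qed
qed auto

lemma fmul_mono_left: "fmul (mono u) b = (\<lambda>v. if (\<exists>v'. v = u @ v') then b (drop (length u) v) else 0)"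
proof (rule ext)
  fix v :: word
  let ?S = "{(v1, v2). v1 @ v2 = v}"
  have "fmul (mono u) b v = (\<Sum>p\<in>?S. if p = (u, drop (length u) v) then b (snd p) else 0)"
    unfolding fmul_def by (rule sum.cong) (auto simp: mono_def split: if_splits)
  also have "\<dots> = (if (u, drop (length u) v) \<in> ?S then b (drop (length u) v) else 0)"
    using split_finite[of v] by (simp add: sum.delta')
  also have "\<dots> = (if (\<exists>v'. v = u @ v') then b (drop (length u) v) else 0)"
    by (auto simp: append_eq_conv_conj) (metis append_take_drop_id)+
  finally show "fmul (mono u) b v = (if (\<exists>v'. v = u @ v') then b (drop (length u) v) else 0)" .
qed

lemma fmul_mono_right: "fmul a (mono w) = (\<lambda>v. if (\<exists>v'. v = v' @ w) then a (take (length v - length w) v) else 0)"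
proof (rule ext)
  fix v :: word
  let ?S = "{(v1, v2). v1 @ v2 = v}"
  have "fmul a (mono w) v = (\<Sum>p\<in>?S. if p = (take (length v - length w) v, w) then a (fst p) else 0)"
    unfolding fmul_def by (rule sum.cong) (auto simp: mono_def split: if_splits)
  also have "\<dots> = (if (take (length v - length w) v, w) \<in> ?S then a (take (length v - length w) v) else 0)"
    using split_finite[of v] by (simp add: sum.delta')
  also have "\<dots> = (if (\<exists>v'. v = v' @ w) then a (take (length v - length w) v) else 0)"
    by (auto simp: append_eq_conv_conj) (metis append_take_drop_id)+
  finally show "fmul a (mono w) v = (if (\<exists>v'. v = v' @ w) then a (take (length v - length w) v) else 0)" .
qed

lemma fmul_mono_mono: "fmul (mono u) (mono v) = mono (u @ v)"
  unfolding fmul_mono_left by (rule ext) (auto simp: mono_def)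

lemma fmul_fsub1: "fmul (fsub a b) c = fsub (fmul a c) (fmul b c)"
  by (simp add: fmul_def fsub_def fun_eq_iff sum_subtractf algebra_simps case_prod_beta)
lemma fmul_fsub2: "fmul c (fsub a b) = fsub (fmul c a) (fmul c b)"
  by (simp add: fmul_def fsub_def fun_eq_iff sum_subtractf algebra_simps case_prod_beta)
lemma fmul_fscale1: "fmul (fscale k a) c = fscale k (fmul a c)"
  by (simp add: fmul_def fscale_def fun_eq_iff sum_distrib_left algebra_simps case_prod_beta)
lemma fmul_fscale2: "fmul c (fscale k a) = fscale k (fmul c a)"
  by (simp add: fmul_def fscale_def fun_eq_iff sum_distrib_left algebra_simps case_prod_beta)
lemma fmul_fadd1: "fmul (fadd a b) c = fadd (fmul a c) (fmul b c)"
  by (simp add: fmul_def fadd_def fun_eq_iff sum.distrib algebra_simps case_prod_beta)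

lemma ctx_mono: "fmul (mono u) (fmul (mono v) (mono w)) = mono (u @ v @ w)"
  by (simp add: fmul_mono_mono)

lemmas ctx_simps = fmul_fsub1 fmul_fsub2 fmul_fscale1 fmul_fscale2 ctx_mono

lemma fin_fmul_right:
  assumes "finite {u. a u \<noteq> 0}" shows "finite {u. fmul a (mono t) u \<noteq> 0}"
  by (rule finite_subset[of _ "(\<lambda>w. w @ t) ` {u. a u \<noteq> 0}"]) (use assms in \<open>auto simp: fmul_mono_right\<close>)

lemma LinF_fmul_right:
  assumes "finite {u. a u \<noteq> 0}"
  shows "LinF F (fmul a (mono t)) = (\<Sum>w\<in>{u. a u \<noteq> 0}. a w * F (w @ t))"
proof -
  let ?S = "(\<lambda>w. w @ t) ` {u. a u \<noteq> 0}"
  have "LinF F (fmul a (mono t)) = (\<Sum>v\<in>?S. fmul a (mono t) v * F v)"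
    by (rule LinF_eq) (use assms in \<open>auto simp: fmul_mono_right\<close>)
  also have "\<dots> = (\<Sum>w\<in>{u. a u \<noteq> 0}. fmul a (mono t) (w @ t) * F (w @ t))"
    by (simp add: sum.reindex inj_on_def)
  also have "\<dots> = (\<Sum>w\<in>{u. a u \<noteq> 0}. a w * F (w @ t))"
    by (simp add: fmul_mono_right)
  finally show ?thesis .
qed



definition actG :: "nat \<Rightarrow> letter \<Rightarrow> state \<Rightarrow> state" where
  "actG n x r = (if snd x = -1 then (\<lambda>i. if i = 1 then fst x 1 (2*n-1) * r 0 else if i = 2 then fst x 1 (2*n) * r 0
      else if i = 3 then fst x 1 (2*n) * r 1 - fst x 1 (2*n-1) * r 2 else 0) else (\<lambda>i. 0))"
definition finG :: "state \<Rightarrow> complex" where "finG r = r 3"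
definition act0 :: "letter \<Rightarrow> state \<Rightarrow> state" where "act0 x r = (\<lambda>i. 0)"
definition fin0 :: "state \<Rightarrow> complex" where "fin0 r = r 0"
definition r0 :: state where "r0 = (\<lambda>i. if i = 0 then 1 else 0)"

lemma odd_entries: "2 \<le> n \<Longrightarrow> odd_entry n 1 (2*n-1) \<and> odd_entry n 1 (2*n)"
  by (auto simp: odd_entry_def)

lemma even_zero: assumes "valid n X" "\<not> is_odd_mat n X" "2 \<le> n"
  shows "X 1 (2*n-1) = 0 \<and> X 1 (2*n) = 0"
  using valid_inC[OF assms(1)] odd_entries[OF assms(3)] assms(2) by (auto simp: inC_def)

lemma rmodG: assumes n2: "2 \<le> n" shows "rmod n (actG n) finG"
proof
  show "0 < n" using n2 by simp
next
  fix x a r b r'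
  show "actG n x (\<lambda>i. a * r i + b * r' i) = (\<lambda>i. a * actG n x r i + b * actG n x r' i)"
    by (auto simp: actG_def fun_eq_iff algebra_simps)
next
  fix a r b r'
  show "finG (\<lambda>i. a * r i + b * r' i) = a * finG r + b * finG r'" by (simp add: finG_def)
next
  fix a X b Y m r
  show "actG n (lc a X b Y, m) r = (\<lambda>i. a * actG n (X, m) r i + b * actG n (Y, m) r i)"
    by (auto simp: actG_def lc_def fun_eq_iff algebra_simps)
next
  fix m r
  have "idm n 1 (2*n-1) = 0" "idm n 1 (2*n) = 0" using n2 by (auto simp: idm_def)
  then show "actG n (idm n, m) r = (\<lambda>i. 0)" unfolding actG_def fst_conv snd_conv by (auto simp: fun_eq_iff)
next
  fix X Y :: smat and m l :: int and r
  assume vX: "valid n X" and vY: "valid n Y" and hm: "m < 0" and hl: "l < 0"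
  have z: "actG n (sbr n X Y, m + l) r = (\<lambda>i. 0)" using hm hl by (simp add: actG_def)
  show "actG n (Y, l) (actG n (X, m) r) = (\<lambda>i. sgn n X Y * actG n (X, m) (actG n (Y, l) r) i + actG n (sbr n X Y, m + l) r i)"
  proof (cases "m = -1 \<and> l = -1")
    case True
    show ?thesis
    proof (cases "is_odd_mat n X \<and> is_odd_mat n Y")
      case True
      then have "sgn n X Y = -1" by (simp add: sgn_def)
      then show ?thesis using \<open>m = -1 \<and> l = -1\<close> z by (auto simp: actG_def fun_eq_iff algebra_simps)
    next
      case False
      then have "(X 1 (2*n-1) = 0 \<and> X 1 (2*n) = 0) \<or> (Y 1 (2*n-1) = 0 \<and> Y 1 (2*n) = 0)"
        using even_zero[OF vX _ n2] even_zero[OF vY _ n2] by blast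
      then show ?thesis using \<open>m = -1 \<and> l = -1\<close> z by (auto simp: actG_def fun_eq_iff algebra_simps)
    qed
  next
    case False
    then show ?thesis using z by (auto simp: actG_def fun_eq_iff)
  qed
qed

lemma rmod0: assumes "0 < n" shows "rmod n act0 fin0"
  by standard (auto simp: act0_def fin0_def assms)

lemma Jid_Good:
  assumes R: "rmod n act fin" and a: "a \<in> Jid n"
  shows "Good (Phi n act fin r) a"
proof -
  let ?F = "Phi n act fin r"
  have relF: "\<And>rr u w. rr \<in> rels n \<Longrightarrow> validw n u \<Longrightarrow> validw n w \<Longrightarrow> Good ?F (fmul (mono u) (fmul rr (mono w)))"
  proof -
    fix rr u w assume rr: "rr \<in> rels n" and vu: "validw n u" and vw: "validw n w"
    from rr show "Good ?F (fmul (mono u) (fmul rr (mono w)))"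
    proof (cases rule: rels.cases)
      case (lin X Y a b m)
      have e: "(\<lambda>i j. a * X i j + b * Y i j) = lc a X b Y" by (simp add: lc_def)
      have cX: "inC n (is_odd_mat n X) X" by (rule valid_inC[OF lin(2)])
      have cY: "inC n (is_odd_mat n X) Y" using valid_inC[OF lin(3)] lin(4) by simp
      have "?F (u @ (lc a X b Y, m) # w) = a * ?F (u @ (X, m) # w) + b * ?F (u @ (Y, m) # w)"
        by (rule rmod.LIN[OF R vu vw lin(2) lin(3) cX cY])
      then show ?thesis unfolding lin(1) ctx_simps e
        by (simp add: Good_def fin_fsub fin_fscale fin_mono LinF_fsub LinF_fscale LinF_mono)
    next
      case (cent m)
      have "?F (u @ (idm n, m) # w) = 0" by (rule rmod.CENT[OF R vu vw])
      then show ?thesis unfolding cent ctx_simps by (simp add: Good_def fin_mono LinF_mono)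
    next
      case (brk X Y m l)
      have "?F (u @ (X, m) # (Y, l) # w) - sg n (X, m) (Y, l) * ?F (u @ (Y, l) # (X, m) # w)
          = ?F (u @ bl n (X, m) (Y, l) # w) + om n (X, m) (Y, l) * ?F (u @ w)"
        by (rule rmod.R3[OF R vu vw]) (use brk in auto)
      then show ?thesis unfolding brk(1) ctx_simps
        by (simp add: Good_def fin_fsub fin_fscale fin_mono LinF_fsub LinF_fscale LinF_mono sg_def bl_def om_def algebra_simps)
    qed
  qed
  have annF: "\<And>u X m. validw n u \<Longrightarrow> valid n X \<Longrightarrow> 0 \<le> m \<Longrightarrow> Good ?F (fmul (mono u) (mono [(X, m)]))"
  proof -
    fix u X and m :: int assume "validw n u" "valid n X" "0 \<le> m"
    have "Phi n act fin r (u @ [(X, m)]) = 0" by (rule rmod.L0[OF R]) (use \<open>0 \<le> m\<close> in simp)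
    then show "Good ?F (fmul (mono u) (mono [(X, m)]))"
      by (simp add: fmul_mono_mono Good_def fin_mono LinF_mono)
  qed
  show ?thesis by (rule Good_Jid[OF relF annF a])
qed



lemma J_fsub: "a \<in> Jid n \<Longrightarrow> b \<in> Jid n \<Longrightarrow> fsub a b \<in> Jid n"
proof -
  assume a: "a \<in> Jid n" and b: "b \<in> Jid n"
  have "fsub a b = fadd a (fscale (-1) b)" by (simp add: fun_eq_iff fsub_def fadd_def fscale_def)
  then show ?thesis using Jid.add[OF a Jid.scale[OF b]] by simp
qed

lemma J_lincomb: "(\<forall>g\<in>set gs. snd g \<in> Jid n) \<Longrightarrow> (\<And>v. t v = (\<Sum>g\<leftarrow>gs. fst g * snd g v)) \<Longrightarrow> t \<in> Jid n"
proof (induction gs arbitrary: t)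
  case Nil
  then have "t = (\<lambda>_. 0)" by (simp add: fun_eq_iff)
  then show ?case using Jid.zero by simp
next
  case (Cons g gs)
  let ?t' = "\<lambda>v. (\<Sum>g\<leftarrow>gs. fst g * snd g v)"
  have "?t' \<in> Jid n" using Cons.IH Cons.prems by simp
  moreover have "t = fadd (fscale (fst g) (snd g)) ?t'" using Cons.prems by (simp add: fun_eq_iff fadd_def fscale_def)
  moreover have "fadd (fscale (fst g) (snd g)) ?t' \<in> Jid n"
    using Jid.add[OF Jid.scale \<open>?t' \<in> Jid n\<close>] Cons.prems by simp
  ultimately show ?case by simp
qed

lemma J_brk:
  assumes "validw n u" "validw n w" "valid n X" "valid n Y"
  shows "fsub (fsub (fsub (mono (u @ (X, m) # (Y, l) # w)) (fscale (sgn n X Y) (mono (u @ (Y, l) # (X, m) # w))))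
     (mono (u @ (sbr n X Y, m + l) # w))) (fscale (if m + l = 0 then of_int m * str n (mmul n X Y) else 0) (mono (u @ w))) \<in> Jid n"
  using Jid.rel[OF rels.brk[OF assms(3,4), of m l] assms(1,2)] by (simp add: ctx_simps)

lemma J_lin:
  assumes "validw n u" "validw n w" "valid n X" "valid n Y" "is_odd_mat n X = is_odd_mat n Y"
  shows "fsub (fsub (mono (u @ (lc a X b Y, m) # w)) (fscale a (mono (u @ (X, m) # w)))) (fscale b (mono (u @ (Y, m) # w))) \<in> Jid n"
proof -
  have e: "(\<lambda>i j. a * X i j + b * Y i j) = lc a X b Y" by (simp add: lc_def)
  show ?thesis using Jid.rel[OF rels.lin[OF assms(3,4,5), of a b m] assms(1,2)] by (simp add: ctx_simps e)
qed

lemma J_ann: "validw n u \<Longrightarrow> valid n X \<Longrightarrow> 0 \<le> m \<Longrightarrow> mono (u @ [(X, m)]) \<in> Jid n"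
  using Jid.ann[of n u X m] by (simp add: fmul_mono_mono)

lemma J_zero: assumes "validw n u" "validw n w" shows "mono (u @ ((\<lambda>i j. 0), m) # w) \<in> Jid n"
proof -
  have "fsub (fsub (mono (u @ (lc 0 (\<lambda>i j. 0) 0 (\<lambda>i j. 0), m) # w)) (fscale 0 (mono (u @ ((\<lambda>i j. 0), m) # w))))
      (fscale 0 (mono (u @ ((\<lambda>i j. 0), m) # w))) \<in> Jid n"
    by (rule J_lin[OF assms valid_zero valid_zero refl])
  moreover have "fsub (fsub (mono (u @ (lc 0 (\<lambda>i j. 0) 0 (\<lambda>i j. 0), m) # w)) (fscale 0 (mono (u @ ((\<lambda>i j. 0), m) # w))))
      (fscale 0 (mono (u @ ((\<lambda>i j. 0), m) # w))) = mono (u @ ((\<lambda>i j. 0), m) # w)"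
    by (simp add: fun_eq_iff fsub_def fscale_def lc_def)
  ultimately show ?thesis by simp
qed

lemma mmul_Er: "1 \<le> p \<Longrightarrow> p \<le> 2*n \<Longrightarrow> mmul n A (Emat p q) = (\<lambda>i j. if j = q then A i p else 0)"
proof (rule ext, rule ext)
  fix i j assume p: "1 \<le> p" "p \<le> 2*n"
  have "mmul n A (Emat p q) i j = (\<Sum>k\<in>{1..2*n}. if k = p then (if j = q then A i p else 0) else 0)"
    unfolding mmul_def Emat_def by (rule sum.cong) auto
  also have "\<dots> = (if j = q then A i p else 0)" using p by (simp add: sum.delta')
  finally show "mmul n A (Emat p q) i j = (if j = q then A i p else 0)" .
qed

lemma mmul_El: "1 \<le> q \<Longrightarrow> q \<le> 2*n \<Longrightarrow> mmul n (Emat p q) A = (\<lambda>i j. if i = p then A q j else 0)"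
proof (rule ext, rule ext)
  fix i j assume q: "1 \<le> q" "q \<le> 2*n"
  have "mmul n (Emat p q) A i j = (\<Sum>k\<in>{1..2*n}. if k = q then (if i = p then A q j else 0) else 0)"
    unfolding mmul_def Emat_def by (rule sum.cong) auto
  also have "\<dots> = (if i = p then A q j else 0)" using q by (simp add: sum.delta')
  finally show "mmul n (Emat p q) A i j = (if i = p then A q j else 0)" .
qed

lemma str_col: "1 \<le> q \<Longrightarrow> q \<le> 2*n \<Longrightarrow> str n (\<lambda>i j. if j = q then A i p else 0) = eps n q * A q p"
proof -
  assume q: "1 \<le> q" "q \<le> 2*n"
  have "str n (\<lambda>i j. if j = q then A i p else 0) = (\<Sum>i\<in>{1..2*n}. if i = q then eps n q * A q p else 0)"
    unfolding str_eps by (rule sum.cong) auto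
  also have "\<dots> = eps n q * A q p" using q by (simp add: sum.delta')
  finally show ?thesis .
qed

locale nn =
  fixes n :: nat
  assumes n2: "2 \<le> n"
begin

abbreviation "EE \<equiv> Emat 1 (2*n-1)"
abbreviation "FF \<equiv> Emat 1 (2*n)"

lemma ie: "1 \<le> 2*n-1" "2*n-1 \<le> 2*n" "2*n-1 \<noteq> 1" "2*n \<noteq> 1" "2*n-1 \<noteq> 2*n" "1 \<le> 2*n" "n < 2*n-1" "\<not> 2*n - 1 \<le> n" "\<not> 2*n \<le> n"
  using n2 by auto

lemma E_inC: "inC n True EE" and F_inC: "inC n True FF"
  using ie by (auto simp: inC_def Emat_def odd_entry_def)

lemma valid_E: "valid n EE" and valid_F: "valid n FF"
proof -
  show "valid n EE"
    by (rule valid_intro[OF _ _ E_inC]) (use ie in \<open>auto simp: is_mat_def Emat_def str_def\<close>)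
  show "valid n FF"
    by (rule valid_intro[OF _ _ F_inC]) (use ie in \<open>auto simp: is_mat_def Emat_def str_def\<close>)
qed

lemma E_odd: "is_odd_mat n EE" and F_odd: "is_odd_mat n FF"
proof -
  have "EE \<noteq> zmat" "FF \<noteq> zmat" using ie by (auto simp: zmat_def Emat_def fun_eq_iff)
  then show "is_odd_mat n EE" "is_odd_mat n FF" using inC_par E_inC F_inC by auto
qed

lemma odd_A: "odd_entry n (2*n-1) 1" and odd_B: "odd_entry n (2*n) 1"
  using ie by (auto simp: odd_entry_def)

end


context nn begin

lemma Y_odd_zero: "valid n Y \<Longrightarrow> \<not> is_odd_mat n Y \<Longrightarrow> Y (2*n-1) 1 = 0 \<and> Y (2*n) 1 = 0"
  using valid_inC[of n Y] odd_A odd_B by (auto simp: inC_def)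

lemma sgn_oddE: "is_odd_mat n Y \<Longrightarrow> sgn n Y EE = -1" "is_odd_mat n Y \<Longrightarrow> sgn n Y FF = -1"
  using E_odd F_odd by (auto simp: sgn_def)

lemma ZYE: "sbr n Y EE = (\<lambda>i j. (if j = 2*n-1 then Y i 1 else 0) - sgn n Y EE * (if i = 1 then Y (2*n-1) j else 0))"
  unfolding sbr_def mmul_Er[OF order_refl ie(6)] mmul_El[OF ie(1) ie(2)] by simp

lemma ZYF: "sbr n Y FF = (\<lambda>i j. (if j = 2*n then Y i 1 else 0) - sgn n Y FF * (if i = 1 then Y (2*n) j else 0))"
  unfolding sbr_def mmul_Er[OF order_refl ie(6)] mmul_El[OF ie(6) order_refl] by simp

lemma str_YE: "str n (mmul n Y EE) = - Y (2*n-1) 1"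
  unfolding mmul_Er[OF order_refl ie(6)] str_col[OF ie(1) ie(2)] using ie by (simp add: eps_def)

lemma str_YF: "str n (mmul n Y FF) = - Y (2*n) 1"
  unfolding mmul_Er[OF order_refl ie(6)] str_col[OF ie(6) order_refl] using ie by (simp add: eps_def)

lemma chi_zero:
  assumes vY: "valid n Y" and up: "strictly_upper n Y" and vu: "validw n u"
  shows "mono (u @ [(Y, 0), (EE, -1), (FF, -1)]) \<in> Jid n"
proof -
  let ?sy = "sgn n Y EE" and ?sf = "sgn n Y FF"
  let ?c = "- ?sy * Y (2*n-1) (2*n)"
  have mY: "is_mat n Y" using vY by (simp add: valid_def sl_def)
  have upY: "\<And>i j. Y i j \<noteq> 0 \<Longrightarrow> i < j" using up by (simp add: strictly_upper_def)
  have Y1: "\<And>i. Y i 1 = 0"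
  proof -
    fix i show "Y i 1 = 0"
    proof (rule ccontr)
      assume h: "Y i 1 \<noteq> 0"
      then have "i < 1" using upY by blast
      moreover have "1 \<le> i" using h mY unfolding is_mat_def by auto
      ultimately show False by simp
    qed
  qed
  have Y2: "\<And>j. Y (2*n) j = 0"
  proof -
    fix j show "Y (2*n) j = 0"
    proof (rule ccontr)
      assume h: "Y (2*n) j \<noteq> 0"
      then have "2*n < j" using upY by blast
      moreover have "j \<le> 2*n" using h mY unfolding is_mat_def by auto
      ultimately show False by simp
    qed
  qed
  have Y3: "\<And>j. j \<noteq> 2*n \<Longrightarrow> Y (2*n-1) j = 0"
  proof -
    fix j assume j: "j \<noteq> 2*n"
    show "Y (2*n-1) j = 0"
    proof (rule ccontr)
      assume "Y (2*n-1) j \<noteq> 0"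
      then have "2*n-1 < j" "j \<le> 2*n" using upY[of "2*n-1" j] mY unfolding is_mat_def by auto
      then show False using j by linarith
    qed
  qed
  have Z: "sbr n Y EE = lc ?c FF 0 FF"
    unfolding ZYE using Y1 Y3 by (auto simp: fun_eq_iff lc_def Emat_def)
  have W: "sbr n Y FF = (\<lambda>i j. 0)"
    unfolding ZYF using Y1 Y2 by (auto simp: fun_eq_iff)
  have FFz: "sbr n FF FF = (\<lambda>i j. 0)"
    unfolding sbr_def mmul_Er[OF order_refl ie(6)] using ie by (auto simp: fun_eq_iff Emat_def)
  have sFF: "sgn n FF FF = -1" using F_odd by (simp add: sgn_def)
  have vf: "validw n [(FF, -1)]" and ve: "validw n [(EE, -1)]" using valid_E valid_F by auto
  define g1 where "g1 = fsub (fsub (fsub (mono (u @ (Y, 0) # (EE, -1) # [(FF, -1)])) (fscale ?sy (mono (u @ (EE, -1) # (Y, 0) # [(FF, -1)]))))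
     (mono (u @ (sbr n Y EE, 0 + -1) # [(FF, -1)]))) (fscale (if 0 + -1 = (0::int) then of_int 0 * str n (mmul n Y EE) else 0) (mono (u @ [(FF, -1)])))"
  have G1: "g1 \<in> Jid n" unfolding g1_def by (rule J_brk[OF vu vf vY valid_E])
  define g2 where "g2 = fsub (fsub (fsub (mono ((u @ [(EE, -1)]) @ (Y, 0) # (FF, -1) # [])) (fscale ?sf (mono ((u @ [(EE, -1)]) @ (FF, -1) # (Y, 0) # []))))
     (mono ((u @ [(EE, -1)]) @ (sbr n Y FF, 0 + -1) # []))) (fscale (if 0 + -1 = (0::int) then of_int 0 * str n (mmul n Y FF) else 0) (mono ((u @ [(EE, -1)]) @ [])))"
  have G2: "g2 \<in> Jid n" unfolding g2_def by (rule J_brk) (use vu ve vY valid_F in auto)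
  define a1 where "a1 = mono ((u @ [(EE, -1), (FF, -1)]) @ [(Y, 0)])"
  have A1: "a1 \<in> Jid n" unfolding a1_def by (rule J_ann) (use vu vY valid_E valid_F in auto)
  define zw where "zw = mono ((u @ [(EE, -1)]) @ ((\<lambda>i j. 0), -1) # [])"
  have ZW: "zw \<in> Jid n" unfolding zw_def by (rule J_zero) (use vu ve in auto)
  define h where "h = fsub (fsub (mono (u @ (lc ?c FF 0 FF, -1) # [(FF, -1)])) (fscale ?c (mono (u @ (FF, -1) # [(FF, -1)]))))
      (fscale 0 (mono (u @ (FF, -1) # [(FF, -1)])))"
  have H: "h \<in> Jid n" unfolding h_def by (rule J_lin[OF vu vf valid_F valid_F refl])
  define gff where "gff = fsub (fsub (fsub (mono (u @ (FF, -1) # (FF, -1) # [])) (fscale (sgn n FF FF) (mono (u @ (FF, -1) # (FF, -1) # []))))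
     (mono (u @ (sbr n FF FF, -1 + -1) # []))) (fscale (if -1 + -1 = (0::int) then of_int (-1) * str n (mmul n FF FF) else 0) (mono (u @ [])))"
  have GFF: "gff \<in> Jid n" unfolding gff_def by (rule J_brk[OF vu validw_Nil valid_F valid_F])
  define zz where "zz = mono (u @ ((\<lambda>i j. 0), -2) # [])"
  have ZZ: "zz \<in> Jid n" unfolding zz_def by (rule J_zero[OF vu validw_Nil])
  show ?thesis
  proof (rule J_lincomb[where gs = "[(1, g1), (?sy, g2), (?sy * ?sf, a1), (?sy, zw), (1, h), (?c / 2, gff), (?c / 2, zz)]"])
    show "\<forall>g\<in>set [(1, g1), (?sy, g2), (?sy * ?sf, a1), (?sy, zw), (1, h), (?c / 2, gff), (?c / 2, zz)]. snd g \<in> Jid n"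
      using G1 G2 A1 ZW H GFF ZZ by auto
  next
    fix v
    show "mono (u @ [(Y, 0), (EE, -1), (FF, -1)]) v = (\<Sum>g\<leftarrow>[(1, g1), (?sy, g2), (?sy * ?sf, a1), (?sy, zw), (1, h), (?c / 2, gff), (?c / 2, zz)]. fst g * snd g v)"
      unfolding g1_def g2_def a1_def zw_def h_def gff_def zz_def Z W FFz sFF
      by (simp add: fsub_def fscale_def field_simps)
  qed
qed

end


context nn begin

lemma chi_pos:
  assumes vY: "valid n Y" and m1: "1 \<le> m" and vu: "validw n u"
  shows "mono (u @ [(Y, m), (EE, -1), (FF, -1)]) \<in> Jid n"
proof -
  let ?sy = "sgn n Y EE" and ?sf = "sgn n Y FF"
  define Z where "Z = sbr n Y EE"
  define W where "W = sbr n Y FF"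
  let ?sz = "sgn n Z FF"
  have vZ: "valid n Z" and vW: "valid n W" unfolding Z_def W_def using valid_sbr vY valid_E valid_F by auto
  have vf: "validw n [(FF, -1)]" and ve: "validw n [(EE, -1)]" using valid_E valid_F by auto
  define c1 where "c1 = (if m + -1 = 0 then of_int m * str n (mmul n Y EE) else 0)"
  define c2 where "c2 = (if m + -1 = 0 then of_int m * str n (mmul n Y FF) else 0)"
  define c3 where "c3 = (if m + -1 + -1 = 0 then of_int (m + -1) * str n (mmul n Z FF) else 0)"
  define g1 where "g1 = fsub (fsub (fsub (mono (u @ (Y, m) # (EE, -1) # [(FF, -1)])) (fscale ?sy (mono (u @ (EE, -1) # (Y, m) # [(FF, -1)]))))
     (mono (u @ (Z, m + -1) # [(FF, -1)]))) (fscale c1 (mono (u @ [(FF, -1)])))"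
  have G1: "g1 \<in> Jid n" unfolding g1_def c1_def Z_def by (rule J_brk[OF vu vf vY valid_E])
  define g2 where "g2 = fsub (fsub (fsub (mono ((u @ [(EE, -1)]) @ (Y, m) # (FF, -1) # [])) (fscale ?sf (mono ((u @ [(EE, -1)]) @ (FF, -1) # (Y, m) # []))))
     (mono ((u @ [(EE, -1)]) @ (W, m + -1) # []))) (fscale c2 (mono ((u @ [(EE, -1)]) @ [])))"
  have G2: "g2 \<in> Jid n" unfolding g2_def c2_def W_def by (rule J_brk) (use vu ve vY valid_F in auto)
  define a1 where "a1 = mono ((u @ [(EE, -1), (FF, -1)]) @ [(Y, m)])"
  have A1: "a1 \<in> Jid n" unfolding a1_def by (rule J_ann) (use vu vY valid_E valid_F m1 in auto)
  define a2 where "a2 = mono ((u @ [(EE, -1)]) @ [(W, m + -1)])"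
  have A2: "a2 \<in> Jid n" unfolding a2_def by (rule J_ann) (use vu vW valid_E m1 in auto)
  define g3 where "g3 = fsub (fsub (fsub (mono (u @ (Z, m + -1) # (FF, -1) # [])) (fscale ?sz (mono (u @ (FF, -1) # (Z, m + -1) # []))))
     (mono (u @ (sbr n Z FF, m + -1 + -1) # []))) (fscale c3 (mono (u @ [])))"
  have G3: "g3 \<in> Jid n" unfolding g3_def c3_def by (rule J_brk[OF vu validw_Nil vZ valid_F])
  define a3 where "a3 = mono ((u @ [(FF, -1)]) @ [(Z, m + -1)])"
  have A3: "a3 \<in> Jid n" unfolding a3_def by (rule J_ann) (use vu vZ valid_F m1 in auto)
  define rem where "rem = (\<lambda>v. mono (u @ [(sbr n Z FF, m + -1 + -1)]) v + c3 * mono u v + c1 * mono (u @ [(FF, -1)]) v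
      + ?sy * c2 * mono (u @ [(EE, -1)]) v)"
  have vZF: "valid n (sbr n Z FF)" using valid_sbr vZ valid_F by auto
  have REM: "rem \<in> Jid n"
  proof (cases "m = 1")
    case True
    let ?A = "Y (2*n-1) 1" and ?B = "Y (2*n) 1"
    have Zi1: "\<And>i. Z i 1 = - ?sy * (if i = 1 then ?A else 0)" unfolding Z_def ZYE using ie by auto
    have Z2n: "\<And>j. Z (2*n) j = (if j = 2*n-1 then ?B else 0)" unfolding Z_def ZYE using ie by auto
    have ZF: "sbr n Z FF = lc (- ?sz * ?B) EE (- ?sy * ?A) FF"
      unfolding ZYF using Zi1 Z2n ie by (auto simp: fun_eq_iff lc_def Emat_def)
    have k1: "(1 + ?sy) * ?A = 0"
    proof (cases "is_odd_mat n Y")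
      case True then show ?thesis using sgn_oddE by simp
    next
      case False then show ?thesis using Y_odd_zero[OF vY] by simp
    qed
    have k2: "(?sz + ?sy) * ?B = 0"
    proof (cases "is_odd_mat n Y")
      case True
      show ?thesis
      proof (cases "Z = zmat")
        case True
        then have "Z (2*n) (2*n-1) = 0" by (simp add: zmat_def)
        then show ?thesis using Z2n[of "2*n-1"] by simp
      next
        case False
        then have "is_odd_mat n Z = (is_odd_mat n Y \<noteq> is_odd_mat n EE)" unfolding Z_def
          using sbr_nz_par[OF vY valid_E] by simp
        then have "is_odd_mat n Z = False" using True E_odd by simp
        then have "?sz = 1" by (simp add: sgn_def)
        then show ?thesis using sgn_oddE True by simp
      qed
    next
      case False then show ?thesis using Y_odd_zero[OF vY] by simp
    qed
    define h where "h = fsub (fsub (mono (u @ (lc (- ?sz * ?B) EE (- ?sy * ?A) FF, -1) # [])) (fscale (- ?sz * ?B) (mono (u @ (EE, -1) # []))))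
        (fscale (- ?sy * ?A) (mono (u @ (FF, -1) # [])))"
    have H: "h \<in> Jid n" unfolding h_def by (rule J_lin[OF vu validw_Nil valid_E valid_F]) (use E_odd F_odd in simp)
    have cc1: "c1 = - ?A" unfolding c1_def using True str_YE by simp
    have cc2: "c2 = - ?B" unfolding c2_def using True str_YF by simp
    have cc3: "c3 = 0" unfolding c3_def using True by simp
    show ?thesis
    proof (rule J_lincomb[where gs = "[(1, h)]"])
      show "\<forall>g\<in>set [(1, h)]. snd g \<in> Jid n" using H by simp
    next
      fix v
      have "rem v = h v - (1 + ?sy) * ?A * mono (u @ [(FF, -1)]) v - (?sz + ?sy) * ?B * mono (u @ [(EE, -1)]) v"
        unfolding rem_def h_def cc1 cc2 cc3 ZF True by (simp add: fsub_def fscale_def algebra_simps)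
      then show "rem v = (\<Sum>g\<leftarrow>[(1, h)]. fst g * snd g v)" unfolding k1 k2 by simp
    qed
  next
    case False
    then have m2: "2 \<le> m" using m1 by simp
    have cc1: "c1 = 0" and cc2: "c2 = 0" unfolding c1_def c2_def using m2 by auto
    have cc3: "c3 = 0"
    proof (cases "m = 2")
      case True
      have "Z (2*n) 1 = 0" unfolding Z_def ZYE using ie by simp
      then have "str n (mmul n Z FF) = 0"
        unfolding mmul_Er[OF order_refl ie(6)] str_col[OF ie(6) order_refl] by simp
      then show ?thesis unfolding c3_def by simp
    next
      case False then show ?thesis unfolding c3_def using m2 by simp
    qed
    have "mono (u @ [(sbr n Z FF, m + -1 + -1)]) \<in> Jid n" by (rule J_ann[OF vu vZF]) (use m2 in simp)
    moreover have "rem = mono (u @ [(sbr n Z FF, m + -1 + -1)])" unfolding rem_def cc1 cc2 cc3 by (simp add: fun_eq_iff)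
    ultimately show ?thesis by simp
  qed
  show ?thesis
  proof (rule J_lincomb[where gs = "[(1, g1), (?sy, g2), (?sy * ?sf, a1), (?sy, a2), (1, g3), (?sz, a3), (1, rem)]"])
    show "\<forall>g\<in>set [(1, g1), (?sy, g2), (?sy * ?sf, a1), (?sy, a2), (1, g3), (?sz, a3), (1, rem)]. snd g \<in> Jid n"
      using G1 G2 A1 A2 G3 A3 REM by auto
  next
    fix v
    show "mono (u @ [(Y, m), (EE, -1), (FF, -1)]) v = (\<Sum>g\<leftarrow>[(1, g1), (?sy, g2), (?sy * ?sf, a1), (?sy, a2), (1, g3), (?sz, a3), (1, rem)]. fst g * snd g v)"
      unfolding g1_def g2_def a1_def a2_def g3_def a3_def rem_def
      by (simp add: fsub_def fscale_def algebra_simps)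
  qed
qed

end



context rmod begin

lemma P_bl_swap:
  assumes "validw n R" "validw n w" "valid n (fst x)" "valid n (fst y)"
  shows "P r (R @ bl n y x # w) = - sg n x y * P r (R @ bl n x y # w)"
proof -
  obtain X a where x: "x = (X, a)" by (cases x)
  obtain Y b where y: "y = (Y, b)" by (cases y)
  have vx: "valid n X" and vy: "valid n Y" using assms x y by auto
  have cl: "inC n (is_odd_mat n X \<noteq> is_odd_mat n Y) (sbr n X Y)" using inC_sbr vx vy by simp
  have vs: "valid n (sbr n X Y)" using valid_sbr vx vy by simp
  show ?thesis
    using LIN[OF assms(1,2) vs vs cl cl, of r "- sgn n X Y" 0 "a + b"]
    unfolding bl_def x y fst_conv snd_conv sbr_antisym[of n Y X] sg_def by (simp add: add.commute)
qed

end

lemma ev_neg: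
  assumes R: "rmod n act0 fin0" and h: "snd x < 0"
  shows "Phi n act0 fin0 r (x # w) = 0"
  using h rmod.P_zero_state[OF R] by (simp add: act0_def)

lemma ev_inv:
  assumes R: "rmod n act0 fin0"
  shows "snd x = 0 \<Longrightarrow> valid n (fst x) \<Longrightarrow> validw n v \<Longrightarrow> Phi n act0 fin0 r (x # v) = 0"
proof (induction "length v" arbitrary: x v rule: less_induct)
  case less
  let ?P = "Phi n act0 fin0 r"
  have nx: "\<not> snd x < 0" using less.prems by simp
  show ?case
  proof (cases v)
    case Nil then show ?thesis using rmod.P_pos[OF R nx] by simp
  next
    case (Cons y v')
    have vy: "valid n (fst y)" and vv': "validw n v'" using less.prems Cons by auto
    show ?thesis
    proof (cases "snd y < 0")
      case True
      have e1: "?P (x # y # v') = ?P (bl n x y # v') + om n x y * ?P v' + sg n x y * SL (\<lambda>V. ?P (y # V)) (Dc n x v')"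
        unfolding rmod.P_pos[OF R nx] SL_Dc_Cons by simp
      have "?P (bl n x y # v') = 0" by (rule ev_neg[OF R]) (use True less.prems in \<open>simp add: bl_def\<close>)
      moreover have "om n x y = 0" using True less.prems by (simp add: om_def)
      moreover have "SL (\<lambda>V. ?P (y # V)) (Dc n x v') = 0" by (rule SL_zero) (use ev_neg[OF R True] in simp)
      ultimately show ?thesis using e1 Cons by simp
    next
      case False
      have r3: "?P (x # y # v') - sg n x y * ?P (y # x # v') = ?P (bl n x y # v') + om n x y * ?P v'"
        using rmod.R3[OF R, of "[]" v' x y r] less.prems vy vv' by simp
      have o1: "om n x y = 0" using less.prems by (simp add: om_def)
      have e2: "?P (y # x # v') = ?P (bl n y x # v') + om n y x * ?P v' + sg n y x * SL (\<lambda>V. ?P (x # V)) (Dc n y v')"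
        unfolding rmod.P_pos[OF R False] SL_Dc_Cons by simp
      have o2: "om n y x = 0" using less.prems by (simp add: om_def)
      have s0: "SL (\<lambda>V. ?P (x # V)) (Dc n y v') = 0"
      proof (rule rmod.SL_words[OF R vy vv'])
        fix U assume "length U \<le> length v'" "validw n U"
        then show "?P (x # U) = 0" using less.hyps[of U x] less.prems Cons by simp
      qed
      have sw: "?P (bl n y x # v') = - sg n x y * ?P (bl n x y # v')"
        using rmod.P_bl_swap[OF R validw_Nil vv', of x y r] less.prems vy by simp
      have q: "sg n x y * sg n x y = 1" by (simp add: sg_sq)
      have "?P (x # y # v') = ?P (bl n x y # v') + sg n x y * (- sg n x y * ?P (bl n x y # v'))"
        using r3 o1 e2 o2 s0 sw by (simp add: algebra_simps)
      also have "\<dots> = 0" using q by (simp add: algebra_simps)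
      finally show ?thesis using Cons by simp
    qed
  qed
qed

context nn begin

abbreviation "ev \<equiv> Phi n act0 fin0 r0"
abbreviation "chi \<equiv> [(EE, -1), (FF, -1)]"

lemma R0: "rmod n act0 fin0" using rmod0 n2 by simp
lemma RG: "rmod n (actG n) finG" using rmodG n2 by simp

lemma ev_J: "a \<in> Jid n \<Longrightarrow> LinF ev a = 0"
  using Jid_Good[OF R0] by (simp add: Good_def)

lemma move_right:
  assumes x: "valid n (fst x)" "1 \<le> snd x"
    and H: "\<And>v. length v \<le> N \<Longrightarrow> validw n v \<Longrightarrow> ev (v @ chi) = 0"
  shows "length u + length w \<le> N \<Longrightarrow> validw n u \<Longrightarrow> validw n w \<Longrightarrow> ev (u @ x # w @ chi) = 0"
proof (induction w arbitrary: u)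
  case Nil
  obtain Y m where xm: "x = (Y, m)" by (cases x)
  have "mono (u @ [(Y, m), (EE, -1), (FF, -1)]) \<in> Jid n" by (rule chi_pos) (use x xm Nil in auto)
  then have "LinF ev (mono (u @ [(Y, m), (EE, -1), (FF, -1)])) = 0" by (rule ev_J)
  then show ?case using xm by (simp add: LinF_mono)
next
  case (Cons y w)
  have vy: "valid n (fst y)" and vw: "validw n w" using Cons.prems by auto
  have ve: "validw n chi" using valid_E valid_F by simp
  have r3: "ev (u @ x # y # (w @ chi)) - sg n x y * ev (u @ y # x # (w @ chi)) = ev (u @ bl n x y # (w @ chi)) + om n x y * ev (u @ (w @ chi))"
    by (rule rmod.R3[OF R0]) (use Cons.prems x vy vw ve in auto)
  have a: "ev (u @ y # x # (w @ chi)) = 0" using Cons.IH[of "u @ [y]"] Cons.prems vy vw by simp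
  have b: "ev (u @ bl n x y # (w @ chi)) = 0"
    using H[of "u @ bl n x y # w"] Cons.prems x vy vw by (simp add: bl_def valid_sbr)
  have c: "ev (u @ (w @ chi)) = 0" using H[of "u @ w"] Cons.prems vw by simp
  show ?case using r3 a b c by simp
qed

lemma ev_chi: "validw n w \<Longrightarrow> ev (w @ chi) = 0"
proof (induction "length w" arbitrary: w rule: less_induct)
  case less
  show ?case
  proof (cases w)
    case Nil then show ?thesis by (simp add: act0_def fin0_def)
  next
    case (Cons x w')
    have vx: "valid n (fst x)" and vw': "validw n w'" using less.prems Cons by auto
    have ve: "validw n chi" using valid_E valid_F by simp
    show ?thesis
    proof (cases "snd x < 0")
      case True then show ?thesis using ev_neg[OF R0 True] Cons by simp
    next
      case False
      show ?thesis
      proof (cases "snd x = 0")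
        case True then show ?thesis using ev_inv[OF R0 True vx] vw' ve Cons by simp
      next
        case False
        then have "1 \<le> snd x" using \<open>\<not> snd x < 0\<close> by simp
        have "ev ([] @ x # w' @ chi) = 0"
        proof (rule move_right[OF vx \<open>1 \<le> snd x\<close>, where N = "length w'"])
          fix v assume "length v \<le> length w'" "validw n v"
          then show "ev (v @ chi) = 0" using less.hyps[of v] Cons by simp
        qed (use vw' in auto)
        then show ?thesis using Cons by simp
      qed
    qed
  qed
qed

lemma valid_even_part: "sl n X \<Longrightarrow> valid n (even_part n X)"
proof -
  assume s: "sl n X"
  show ?thesis
  proof (rule valid_intro[of n _ False])
    show "is_mat n (even_part n X)" using s by (auto simp: sl_def is_mat_def even_part_def split: if_splits)
    have "str n (even_part n X) = str n X" by (simp add: str_def even_part_def odd_entry_def)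
    then show "str n (even_part n X) = 0" using s by (simp add: sl_def)
    show "inC n False (even_part n X)" by (auto simp: inC_def even_part_def split: if_splits)
  qed
qed

lemma valid_odd_part: "sl n X \<Longrightarrow> valid n (odd_part n X)"
proof -
  assume s: "sl n X"
  show ?thesis
  proof (rule valid_intro[of n _ True])
    show "is_mat n (odd_part n X)" using s by (auto simp: sl_def is_mat_def odd_part_def split: if_splits)
    show "str n (odd_part n X) = 0" by (simp add: str_def odd_part_def odd_entry_def)
    show "inC n True (odd_part n X)" by (auto simp: inC_def odd_part_def split: if_splits)
  qed
qed

lemma su_even: "strictly_upper n X \<Longrightarrow> strictly_upper n (even_part n X)"
  by (auto simp: strictly_upper_def is_mat_def even_part_def split: if_splits)
lemma su_odd: "strictly_upper n X \<Longrightarrow> strictly_upper n (odd_part n X)"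
  by (auto simp: strictly_upper_def is_mat_def odd_part_def split: if_splits)

lemma mode_chi: "fmul (mode n X m) (mono chi) = fadd (mono ((even_part n X, m) # chi)) (mono ((odd_part n X, m) # chi))"
  by (simp add: mode_def fmul_fadd1 fmul_mono_mono)

lemma part1: "sl n X \<Longrightarrow> strictly_upper n X \<Longrightarrow> fmul (mode n X 0) (mono chi) \<in> Jid n"
  unfolding mode_chi
  using chi_zero[of "even_part n X" "[]"] chi_zero[of "odd_part n X" "[]"]
    valid_even_part valid_odd_part su_even su_odd Jid.add by simp

lemma part2: "sl n X \<Longrightarrow> 1 \<le> m \<Longrightarrow> fmul (mode n X m) (mono chi) \<in> Jid n"
  unfolding mode_chi
  using chi_pos[of "even_part n X" m "[]"] chi_pos[of "odd_part n X" m "[]"]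
    valid_even_part valid_odd_part Jid.add by simp

lemma part3: "mono chi \<notin> Jid n"
proof
  assume "mono chi \<in> Jid n"
  then have "Good (Phi n (actG n) finG r0) (mono chi)" by (rule Jid_Good[OF RG])
  then have "Phi n (actG n) finG r0 chi = 0" by (simp add: Good_def LinF_mono)
  moreover have "Phi n (actG n) finG r0 chi = 1"
    using ie by (simp add: actG_def finG_def r0_def Emat_def)
  ultimately show False by simp
qed

lemma part4: "inA n (mono []) \<and> (\<forall>a. inA n a \<longrightarrow> fsub (fmul a (mono chi)) (mono []) \<notin> Jid n)"
proof
  show "inA n (mono [])"
    unfolding inA_def using fin_mono[of "[]"] by (auto simp: mono_def split: if_splits)
next
  show "\<forall>a. inA n a \<longrightarrow> fsub (fmul a (mono chi)) (mono []) \<notin> Jid n"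
  proof (intro allI impI notI)
    fix a assume aA: "inA n a" and J: "fsub (fmul a (mono chi)) (mono []) \<in> Jid n"
    have fa: "finite {u. a u \<noteq> 0}" and va: "\<And>u. a u \<noteq> 0 \<Longrightarrow> validw n u" using aA by (auto simp: inA_def)
    have "LinF ev (fsub (fmul a (mono chi)) (mono [])) = 0" by (rule ev_J[OF J])
    moreover have "LinF ev (fsub (fmul a (mono chi)) (mono [])) = LinF ev (fmul a (mono chi)) - LinF ev (mono [])"
      by (rule LinF_fsub[OF fin_fmul_right[OF fa] fin_mono])
    moreover have "LinF ev (fmul a (mono chi)) = 0"
      unfolding LinF_fmul_right[OF fa] by (rule sum.neutral) (use ev_chi va in auto)
    moreover have "LinF ev (mono []) = 1" by (simp add: LinF_mono fin0_def r0_def)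
    ultimately show False by simp
  qed
qed

end

theorem mainTheorem2:
  fixes n :: nat
  assumes "2 \<le> n"
  shows "(\<forall>X. sl n X \<and> strictly_upper n X \<longrightarrow>
            fmul (mode n X 0) (mono [(Emat 1 (2*n-1), -1), (Emat 1 (2*n), -1)]) \<in> Jid n)
       \<and> (\<forall>X (m::int). sl n X \<and> 1 \<le> m \<longrightarrow>
            fmul (mode n X m) (mono [(Emat 1 (2*n-1), -1), (Emat 1 (2*n), -1)]) \<in> Jid n)
       \<and> mono [(Emat 1 (2*n-1), -1), (Emat 1 (2*n), -1)] \<notin> Jid n
       \<and> (\<exists>v. inA n v \<and> (\<forall>a. inA n a \<longrightarrow>
            fsub (fmul a (mono [(Emat 1 (2*n-1), -1), (Emat 1 (2*n), -1)])) v \<notin> Jid n))"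
proof -
  interpret nn n by standard (rule assms)
  show ?thesis using part1 part2 part3 part4 by blast
qed


end
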